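(* Let $\mathcal{G}=(\mathcal{V},\mathcal{E})$ be a finite connected graph, let $\Omega$ be the incidence matrix of an arbitrary orientation of $\mathcal{G}$, and let $q\ge1$. Then for all $\mu,\nu\in\mathcal{P}(\mathcal{V})$, $$W_1(\mu,\nu)=\inf_{f,v,g}\Big\{\Big(\int_0^1\sum_{k\in\mathcal{E}}g(t)_k|v(t)_k|^q\,dt\Big)^{1/q}: \partial_tf=\Omega\cdot(vg),\ f(0)=\mu,\ f(1)=\nu\Big\},$$ and the infimum is attained by at least one triple $(f,v,g)$.
   Context: For a finite graph whose edges have been given an orientation, each edge $k$ goes from $\lfloor k\rfloor$ to $\lceil k\rceil$. The incidence matrix $\Omega=(\omega_{x,k})$ has $\omega_{x,k}=1$ if $x=\lceil k\rceil$, $\omega_{x,k}=-1$ if $x=\lfloor k\rfloor$, and $0$ otherwise. $\mathcal{P}(\mathcal{V})$ and $\mathcal{P}(\mathcal{E})$ denote probability vectors on $\mathcal{V}$ and on $\mathcal{E}$. $W_1$ is the Wasserstein-1 distance on $\mathcal{P}(\mathcal{V})$ with cost the shortest-path distance of the underlying undirected graph (unit edge lengths): $W_1(\mu,\nu)=\min_\pi\sum_{x,y}d(x,y)\pi(x,y)$, the minimum taken over couplings $\pi$ of $\mu$ and $\nu$. The infimum ranges over triples $(f,v,g)$ consisting of an absolutely continuous $f:[0,1]\to\mathcal{P}(\mathcal{V})$, a measurable $v:[0,1]\to\mathbb{R}^{\mathcal{E}}$ and a measurable $g:[0,1]\to\mathcal{P}(\mathcal{E})$. The discrete transport equation $\partial_tf=\Omega\cdot(vg)$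 means $\partial_t f(t)_x=\sum_k\omega_{x,k}v(t)_kg(t)_k$ for a.e. $t$ and all $x$. *)

theory Defs
  imports "HOL-Analysis.Analysis"
begin

text \<open>The orientation is given by the maps lo (tail, floor k) and hi (head, ceiling k).\<close>

definition simple_oriented_graph :: "('e \<Rightarrow> 'v) \<Rightarrow> ('e \<Rightarrow> 'v) \<Rightarrow> bool" where
  "simple_oriented_graph lo hi \<longleftrightarrow>
     (\<forall>k. lo k \<noteq> hi k) \<and>
     (\<forall>k l. {lo k, hi k} = {lo l, hi l} \<longrightarrow> k = l)"

definition adj :: "('e \<Rightarrow> 'v) \<Rightarrow> ('e \<Rightarrow> 'v) \<Rightarrow> 'v \<Rightarrow> 'v \<Rightarrow> bool" where
  "adj lo hi x y \<longleftrightarrow> (\<exists>k. {lo k, hi k} = {x, y})"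

definition is_walk :: "('e \<Rightarrow> 'v) \<Rightarrow> ('e \<Rightarrow> 'v) \<Rightarrow> 'v list \<Rightarrow> 'v \<Rightarrow> 'v \<Rightarrow> bool" where
  "is_walk lo hi xs x y \<longleftrightarrow> xs \<noteq> [] \<and> hd xs = x \<and> last xs = y \<and>
     (\<forall>i. Suc i < length xs \<longrightarrow> adj lo hi (xs ! i) (xs ! Suc i))"

definition connected_graph :: "('e \<Rightarrow> 'v) \<Rightarrow> ('e \<Rightarrow> 'v) \<Rightarrow> bool" where
  "connected_graph lo hi \<longleftrightarrow> (\<forall>x y. \<exists>xs. is_walk lo hi xs x y)"

definition graph_dist :: "('e \<Rightarrow> 'v) \<Rightarrow> ('e \<Rightarrow> 'v) \<Rightarrow> 'v \<Rightarrow> 'v \<Rightarrow> nat" where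
  "graph_dist lo hi x y = (LEAST n. \<exists>xs. is_walk lo hi xs x y \<and> length xs = Suc n)"

definition incidence :: "('e \<Rightarrow> 'v) \<Rightarrow> ('e \<Rightarrow> 'v) \<Rightarrow> 'v \<Rightarrow> 'e \<Rightarrow> real" where
  "incidence lo hi x k = (if x = hi k then 1 else if x = lo k then -1 else 0)"

definition prob_vecs :: "('a::finite \<Rightarrow> real) set" where
  "prob_vecs = {p. (\<forall>x. 0 \<le> p x) \<and> (\<Sum>x\<in>UNIV. p x) = 1}"

definition couplings :: "('v::finite \<Rightarrow> real) \<Rightarrow> ('v \<Rightarrow> real) \<Rightarrow> ('v \<times> 'v \<Rightarrow> real) set" where
  "couplings \<mu> \<nu> = {\<pi>. (\<forall>z. 0 \<le> \<pi> z) \<and>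
      (\<forall>x. (\<Sum>y\<in>UNIV. \<pi> (x, y)) = \<mu> x) \<and> (\<forall>y. (\<Sum>x\<in>UNIV. \<pi> (x, y)) = \<nu> y)}"

definition W1 :: "('e \<Rightarrow> 'v) \<Rightarrow> ('e \<Rightarrow> 'v) \<Rightarrow> ('v::finite \<Rightarrow> real) \<Rightarrow> ('v \<Rightarrow> real) \<Rightarrow> real" where
  "W1 lo hi \<mu> \<nu> = Inf ((\<lambda>\<pi>. \<Sum>z\<in>UNIV. real (graph_dist lo hi (fst z) (snd z)) * \<pi> z) ` couplings \<mu> \<nu>)"

definition absolutely_continuous_real_on :: "(real \<Rightarrow> real) \<Rightarrow> real \<Rightarrow> real \<Rightarrow> bool" where
  "absolutely_continuous_real_on h a b \<longleftrightarrow>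
     (\<forall>\<epsilon>>0. \<exists>\<delta>>0. \<forall>(n::nat) (c::nat \<Rightarrow> real) (d::nat \<Rightarrow> real).
        (\<forall>i<n. a \<le> c i \<and> c i \<le> d i \<and> d i \<le> b) \<and>
        (\<forall>i<n. \<forall>j<n. i \<noteq> j \<longrightarrow> {c i<..<d i} \<inter> {c j<..<d j} = {}) \<and>
        (\<Sum>i<n. d i - c i) < \<delta>
        \<longrightarrow> (\<Sum>i<n. \<bar>h (d i) - h (c i)\<bar>) < \<epsilon>)"

text \<open>A curve in R^V is absolutely continuous iff each coordinate is (V finite).\<close>
definition admissible ::
  "('e::finite \<Rightarrow> 'v::finite) \<Rightarrow> ('e \<Rightarrow> 'v) \<Rightarrow> ('v \<Rightarrow> real) \<Rightarrow> ('v \<Rightarrow> real)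
   \<Rightarrow> (real \<Rightarrow> 'v \<Rightarrow> real) \<Rightarrow> (real \<Rightarrow> 'e \<Rightarrow> real) \<Rightarrow> (real \<Rightarrow> 'e \<Rightarrow> real) \<Rightarrow> bool" where
  "admissible lo hi \<mu> \<nu> f v g \<longleftrightarrow>
     (\<forall>t\<in>{0..1}. f t \<in> prob_vecs) \<and>
     (\<forall>x. absolutely_continuous_real_on (\<lambda>t. f t x) 0 1) \<and>
     (\<forall>k. (\<lambda>t. v t k) \<in> borel_measurable (restrict_space lborel {0..1})) \<and>
     (\<forall>k. (\<lambda>t. g t k) \<in> borel_measurable (restrict_space lborel {0..1})) \<and>
     (\<forall>t\<in>{0..1}. g t \<in> prob_vecs) \<and>
     (AE t in lborel. t \<in> {0..1} \<longrightarrow>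
        (\<forall>x. ((\<lambda>s. f s x) has_real_derivative
               (\<Sum>k\<in>UNIV. incidence lo hi x k * v t k * g t k)) (at t within {0..1}))) \<and>
     f 0 = \<mu> \<and> f 1 = \<nu>"

definition enn_root :: "real \<Rightarrow> ennreal \<Rightarrow> ennreal" where
  "enn_root q I = (if I = \<infinity> then \<infinity> else ennreal (enn2real I powr (1 / q)))"

definition action :: "real \<Rightarrow> (real \<Rightarrow> 'e::finite \<Rightarrow> real) \<Rightarrow> (real \<Rightarrow> 'e \<Rightarrow> real) \<Rightarrow> ennreal" where
  "action q v g = enn_root q
     (\<integral>\<^sup>+ t. ennreal (\<Sum>k\<in>UNIV. g t k * \<bar>v t k\<bar> powr q) * indicator {0..1} t \<partial>lborel)"

end

theory Submission
  imports Defs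
begin

lemma all_Suc_less_Cons2:
  "(\<forall>i. Suc i < length (u # w # r) \<longrightarrow> P i) \<longleftrightarrow> P 0 \<and> (\<forall>i. Suc i < length (w # r) \<longrightarrow> P (Suc i))"
  apply auto
  subgoal for i by (cases i) auto
  done

lemma is_walk_single: "is_walk lo hi [u] x y \<longleftrightarrow> u = x \<and> u = y"
  by (auto simp: is_walk_def)

lemma is_walk_Cons2:
  "is_walk lo hi (u # w # r) x y \<longleftrightarrow> u = x \<and> adj lo hi u w \<and> is_walk lo hi (w # r) w y"
  unfolding is_walk_def all_Suc_less_Cons2 by auto

lemma is_walk_append:
  "is_walk lo hi xs x y \<Longrightarrow> is_walk lo hi ys y z \<Longrightarrow> is_walk lo hi (xs @ tl ys) x z"
proof (induction xs arbitrary: x)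
  case Nil
  then show ?case by (simp add: is_walk_def)
next
  case (Cons u xs)
  show ?case
  proof (cases xs)
    case Nil
    then have "u = x" "u = y" using Cons.prems by (auto simp: is_walk_single)
    moreover obtain y' ys' where "ys = y' # ys'" using Cons.prems by (cases ys) (auto simp: is_walk_def)
    ultimately show ?thesis using Cons.prems Nil by (auto simp: is_walk_def)
  next
    case (Cons w r)
    then have "u = x" "adj lo hi u w" "is_walk lo hi (w # r) w y"
      using Cons.prems(1) by (auto simp: is_walk_Cons2)
    then have "is_walk lo hi ((w # r) @ tl ys) w z" using Cons.IH Cons.prems(2) \<open>xs = w # r\<close> by simp
    then show ?thesis using \<open>u = x\<close> \<open>adj lo hi u w\<close> \<open>xs = w # r\<close> by (simp add: is_walk_Cons2)
  qed
qed

lemma walk_length_tl: "is_walk lo hi ys y z \<Longrightarrow> length (tl ys) = length ys - 1"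
  by simp

lemma graph_dist_le: "is_walk lo hi xs x y \<Longrightarrow> graph_dist lo hi x y \<le> length xs - 1"
  unfolding graph_dist_def
  by (rule Least_le) (auto simp: is_walk_def)

lemma graph_dist_walk:
  assumes "connected_graph lo hi"
  shows "\<exists>xs. is_walk lo hi xs x y \<and> length xs = Suc (graph_dist lo hi x y)"
proof -
  obtain xs where xs: "is_walk lo hi xs x y" using assms unfolding connected_graph_def by blast
  then have "\<exists>n xs. is_walk lo hi xs x y \<and> length xs = Suc n"
    by (auto simp: is_walk_def intro!: exI[of _ "length xs - 1"])
  then show ?thesis unfolding graph_dist_def by (rule LeastI_ex)
qed

lemma graph_dist_refl: "graph_dist lo hi x x = 0"
  using graph_dist_le[of lo hi "[x]" x x] by (simp add: is_walk_def)

lemma graph_dist_edge: "graph_dist lo hi (lo k) (hi k) \<le> 1" "graph_dist lo hi (hi k) (lo k) \<le> 1"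
proof -
  have "is_walk lo hi [lo k, hi k] (lo k) (hi k)"
    by (auto simp: is_walk_Cons2 is_walk_single adj_def)
  then show "graph_dist lo hi (lo k) (hi k) \<le> 1" using graph_dist_le by fastforce
  have "is_walk lo hi [hi k, lo k] (hi k) (lo k)"
    by (auto simp: is_walk_Cons2 is_walk_single adj_def insert_commute)
  then show "graph_dist lo hi (hi k) (lo k) \<le> 1" using graph_dist_le by fastforce
qed

lemma graph_dist_triangle:
  assumes "connected_graph lo hi"
  shows "graph_dist lo hi x z \<le> graph_dist lo hi x y + graph_dist lo hi y z"
proof -
  obtain xs where xs: "is_walk lo hi xs x y" "length xs = Suc (graph_dist lo hi x y)"
    using graph_dist_walk[OF assms] by blast
  obtain ys where ys: "is_walk lo hi ys y z" "length ys = Suc (graph_dist lo hi y z)"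
    using graph_dist_walk[OF assms] by blast
  have "is_walk lo hi (xs @ tl ys) x z" by (rule is_walk_append[OF xs(1) ys(1)])
  from graph_dist_le[OF this] show ?thesis using xs ys by simp
qed

lemma incidence_edge_flow:
  fixes lo hi :: "'e::finite \<Rightarrow> 'v"
  assumes "\<forall>k. lo k \<noteq> hi k" and "adj lo hi u w"
  shows "\<exists>Q. (\<forall>z. (\<Sum>k\<in>UNIV. incidence lo hi z k * Q k) = (if z = w then 1 else 0) - (if z = u then 1 else 0))
           \<and> (\<Sum>k\<in>UNIV. \<bar>Q k\<bar>) \<le> 1"
proof -
  obtain k where k: "{lo k, hi k} = {u, w}" using assms(2) unfolding adj_def by blast
  define s where "s = (if lo k = u then 1 else -1::real)"
  define Q where "Q l = (if l = k then s else 0)" for l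
  have "(\<Sum>l\<in>UNIV. incidence lo hi z l * Q l) = incidence lo hi z k * s" for z
    by (simp add: Q_def if_distrib sum.delta cong: if_cong)
  moreover have "incidence lo hi z k * s = (if z = w then 1 else 0) - (if z = u then 1 else 0)" for z
    using k assms(1)[rule_format, of k] unfolding incidence_def s_def
    by (auto simp: doubleton_eq_iff)
  moreover have "(\<Sum>l\<in>UNIV. \<bar>Q l\<bar>) = 1"
  proof -
    have "\<bar>Q l\<bar> = (if l = k then 1 else 0)" for l by (simp add: Q_def s_def)
    then show ?thesis by simp
  qed
  ultimately show ?thesis by (intro exI[of _ Q]) (metis order_refl)
qed

lemma walk_flow:
  fixes lo hi :: "'e::finite \<Rightarrow> 'v"
  assumes "\<forall>k. lo k \<noteq> hi k"
  shows "is_walk lo hi xs x y \<Longrightarrow> \<exists>P. (\<forall>z. (\<Sum>k\<in>UNIV. incidence lo hi z k * P k) = (if z = y then 1 else 0) - (if z = x then 1 else 0))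
           \<and> (\<Sum>k\<in>UNIV. \<bar>P k\<bar>) \<le> real (length xs - 1)"
proof (induction xs arbitrary: x)
  case Nil
  then show ?case by (simp add: is_walk_def)
next
  case (Cons u xs)
  show ?case
  proof (cases xs)
    case Nil
    then have "x = y" using Cons.prems by (auto simp: is_walk_single)
    then show ?thesis by (intro exI[of _ "\<lambda>_. 0"]) simp
  next
    case (Cons w r)
    then have ux: "u = x" and a: "adj lo hi u w" and wk: "is_walk lo hi (w # r) w y"
      using Cons.prems(1) by (auto simp: is_walk_Cons2)
    obtain P where P: "\<forall>z. (\<Sum>k\<in>UNIV. incidence lo hi z k * P k) = (if z = y then 1 else 0) - (if z = w then 1 else 0)"
      "(\<Sum>k\<in>UNIV. \<bar>P k\<bar>) \<le> real (length (w # r) - 1)"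
      using Cons.IH wk \<open>xs = w # r\<close> by blast
    obtain Q where Q: "\<forall>z. (\<Sum>k\<in>UNIV. incidence lo hi z k * Q k) = (if z = w then 1 else 0) - (if z = u then 1 else 0)"
      "(\<Sum>k\<in>UNIV. \<bar>Q k\<bar>) \<le> 1"
      using incidence_edge_flow[OF assms a] by blast
    have "(\<Sum>k\<in>UNIV. incidence lo hi z k * (P k + Q k)) = (if z = y then 1 else 0) - (if z = x then 1 else 0)" for z
      using P(1)[rule_format, of z] Q(1)[rule_format, of z] ux
      by (simp add: distrib_left sum.distrib)
    moreover have "(\<Sum>k\<in>UNIV. \<bar>P k + Q k\<bar>) \<le> real (length (u # xs) - 1)"
    proof -
      have "(\<Sum>k\<in>UNIV. \<bar>P k + Q k\<bar>) \<le> (\<Sum>k\<in>UNIV. \<bar>P k\<bar> + \<bar>Q k\<bar>)"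
        by (rule sum_mono) (rule abs_triangle_ineq)
      also have "\<dots> \<le> real (length (w # r) - 1) + 1" using P(2) Q(2) by (simp add: sum.distrib)
      finally show ?thesis using \<open>xs = w # r\<close> by simp
    qed
    ultimately show ?thesis by (intro exI[of _ "\<lambda>k. P k + Q k"]) simp
  qed
qed

definition cost :: "('v \<Rightarrow> 'v \<Rightarrow> real) \<Rightarrow> ('v \<times> 'v \<Rightarrow> real) \<Rightarrow> real" where
  "cost d \<pi> = (\<Sum>z\<in>UNIV. d (fst z) (snd z) * \<pi> z)"

lemma cost_double:
  fixes d :: "'v::finite \<Rightarrow> 'v \<Rightarrow> real"
  shows "cost d \<pi> = (\<Sum>x\<in>UNIV. \<Sum>y\<in>UNIV. d x y * \<pi> (x, y))"
  unfolding cost_def by (simp add: sum.cartesian_product split_beta)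

lemma sum_delta_real: "(\<Sum>z\<in>(UNIV::'a::finite set). if z = y then (a::real) else 0) = a"
  by simp

lemma sum_mult3_mid: "(\<Sum>z\<in>A. a * b z * (k::real)) = a * (\<Sum>z\<in>A. b z) * k"
  by (induct A rule: infinite_finite_induct) (auto simp: algebra_simps)

lemma sum_mult3_left: "(\<Sum>z\<in>A. b z * a * (k::real)) = (\<Sum>z\<in>A. b z) * a * k"
  by (induct A rule: infinite_finite_induct) (auto simp: algebra_simps)

lemma sum_mult2_r: "(\<Sum>z\<in>A. b z * (k::real)) = (\<Sum>z\<in>A. b z) * k"
  by (rule sum_distrib_right[symmetric])

lemma cancel_one:
  fixes d :: "'v::finite \<Rightarrow> 'v \<Rightarrow> real"
  assumes tri: "\<And>x y z. d x z \<le> d x y + d y z" and d0: "\<And>x. d x x = 0"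
    and \<mu>0: "\<forall>x. 0 \<le> \<mu> x" and \<nu>0: "\<forall>x. 0 \<le> \<nu> x" and c0: "0 \<le> c"
    and \<pi>: "\<pi> \<in> couplings (\<lambda>x. \<mu> x + (if x = y then c else 0)) (\<lambda>x. \<nu> x + (if x = y then c else 0))"
  shows "\<exists>\<pi>'\<in>couplings \<mu> \<nu>. cost d \<pi>' \<le> cost d \<pi>"
proof -
  have \<pi>0: "\<And>z. 0 \<le> \<pi> z"
    and row: "\<And>x. (\<Sum>z\<in>UNIV. \<pi> (x, z)) = \<mu> x + (if x = y then c else 0)"
    and col: "\<And>z. (\<Sum>x\<in>UNIV. \<pi> (x, z)) = \<nu> z + (if z = y then c else 0)"
    using \<pi> unfolding couplings_def by auto
  define D where "D = \<pi> (y, y)"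
  show ?thesis
  proof (cases "c \<le> D")
    case True
    define \<pi>' where "\<pi>' = (\<lambda>(x, z). \<pi> (x, z) - (if x = y \<and> z = y then c else 0))"
    have r: "(\<Sum>z\<in>UNIV. \<pi>' (x, z)) = \<mu> x" for x
    proof -
      have "(\<Sum>z\<in>UNIV. \<pi>' (x, z)) = (\<Sum>z\<in>UNIV. \<pi> (x, z)) - (\<Sum>z\<in>UNIV. if x = y \<and> z = y then c else 0)"
        by (simp add: \<pi>'_def sum_subtractf)
      also have "(\<Sum>z\<in>UNIV. if x = y \<and> z = y then c else 0) = (if x = y then c else 0)"
        by (cases "x = y") simp_all
      finally show ?thesis using row[of x] by simp
    qed
    have cl: "(\<Sum>x\<in>UNIV. \<pi>' (x, z)) = \<nu> z" for z
    proof -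
      have "(\<Sum>x\<in>UNIV. \<pi>' (x, z)) = (\<Sum>x\<in>UNIV. \<pi> (x, z)) - (\<Sum>x\<in>UNIV. if x = y \<and> z = y then c else 0)"
        by (simp add: \<pi>'_def sum_subtractf)
      also have "(\<Sum>x\<in>UNIV. if x = y \<and> z = y then c else 0) = (if z = y then c else 0)"
        by (cases "z = y") simp_all
      finally show ?thesis using col[of z] by simp
    qed
    have nn: "0 \<le> \<pi>' z" for z
      using \<pi>0[of z] True unfolding \<pi>'_def D_def by (auto split: prod.splits)
    have "cost d \<pi>' = cost d \<pi> - (\<Sum>x\<in>UNIV. \<Sum>z\<in>UNIV. d x z * (if x = y \<and> z = y then c else 0))"
      unfolding cost_double by (simp add: \<pi>'_def right_diff_distrib sum_subtractf)
    also have "(\<Sum>x\<in>UNIV. \<Sum>z\<in>UNIV. d x z * (if x = y \<and> z = y then c else 0)) = 0"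
    proof -
      have "(\<Sum>z\<in>UNIV. d x z * (if x = y \<and> z = y then c else 0)) = 0" for x
        using d0 by (cases "x = y") (simp_all add: if_distrib cong: if_cong)
      then show ?thesis by simp
    qed
    finally have "cost d \<pi>' = cost d \<pi>" by simp
    moreover have "\<pi>' \<in> couplings \<mu> \<nu>" unfolding couplings_def using nn r cl by blast
    ultimately show ?thesis by (metis order_refl)
  next
    case False
    define e where "e = c - D"
    have e0: "0 < e" using False by (simp add: e_def)
    define Iin where "Iin = \<nu> y + e"
    define Iout where "Iout = \<mu> y + e"
    have Iin: "0 < Iin" "e \<le> Iin" using \<nu>0[rule_format, of y] e0 by (auto simp: Iin_def)
    have Iout: "0 < Iout" "e \<le> Iout" using \<mu>0[rule_format, of y] e0 by (auto simp: Iout_def)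
    define \<alpha> where "\<alpha> x = (if x = y then 0 else \<pi> (x, y))" for x
    define \<beta> where "\<beta> z = (if z = y then 0 else \<pi> (y, z))" for z
    have \<alpha>0: "0 \<le> \<alpha> x" for x using \<pi>0 by (simp add: \<alpha>_def)
    have \<beta>0: "0 \<le> \<beta> x" for x using \<pi>0 by (simp add: \<beta>_def)
    have s\<alpha>: "(\<Sum>x\<in>UNIV. \<alpha> x) = Iin"
    proof -
      have "\<pi> (x, y) = (if x = y then D else 0) + \<alpha> x" for x by (simp add: \<alpha>_def D_def)
      then have "(\<Sum>x\<in>UNIV. \<pi> (x, y)) = (\<Sum>x\<in>UNIV. (if x = y then D else 0) + \<alpha> x)" by simp
      also have "\<dots> = D + (\<Sum>x\<in>UNIV. \<alpha> x)" by (simp add: sum.distrib)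
      finally show ?thesis using col[of y] by (simp add: Iin_def e_def)
    qed
    have s\<beta>: "(\<Sum>x\<in>UNIV. \<beta> x) = Iout"
    proof -
      have "\<pi> (y, x) = (if x = y then D else 0) + \<beta> x" for x by (simp add: \<beta>_def D_def)
      then have "(\<Sum>x\<in>UNIV. \<pi> (y, x)) = (\<Sum>x\<in>UNIV. (if x = y then D else 0) + \<beta> x)" by simp
      also have "\<dots> = D + (\<Sum>x\<in>UNIV. \<beta> x)" by (simp add: sum.distrib)
      finally show ?thesis using row[of y] by (simp add: Iout_def e_def)
    qed
    define \<pi>' where "\<pi>' = (\<lambda>(x, z). \<pi> (x, z) - (if x = y \<and> z = y then D else 0)
        - (if z = y then \<alpha> x * (e / Iin) else 0) - (if x = y then \<beta> z * (e / Iout) else 0)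
        + \<alpha> x * \<beta> z * (e / (Iin * Iout)))"
    have nn: "0 \<le> \<pi>' (x, z)" for x z
    proof (cases "x = y"; cases "z = y")
      assume "x = y" "z = y" then show ?thesis by (simp add: \<pi>'_def \<alpha>_def \<beta>_def D_def)
    next
      assume xz: "x = y" "z \<noteq> y"
      have "\<pi>' (x, z) = \<pi> (y, z) * (1 - e / Iout)" using xz by (simp add: \<pi>'_def \<alpha>_def \<beta>_def algebra_simps)
      moreover have "0 \<le> 1 - e / Iout" using Iout by simp
      ultimately show ?thesis using \<pi>0 by simp
    next
      assume xz: "x \<noteq> y" "z = y"
      have "\<pi>' (x, z) = \<pi> (x, y) * (1 - e / Iin)" using xz by (simp add: \<pi>'_def \<alpha>_def \<beta>_def algebra_simps)
      moreover have "0 \<le> 1 - e / Iin" using Iin by simp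
      ultimately show ?thesis using \<pi>0 by simp
    next
      assume xz: "x \<noteq> y" "z \<noteq> y"
      have "0 \<le> \<alpha> x * \<beta> z * (e / (Iin * Iout))" using \<alpha>0 \<beta>0 e0 Iin Iout by simp
      then show ?thesis using xz \<pi>0[of "(x, z)"] by (simp add: \<pi>'_def)
    qed
    have r: "(\<Sum>z\<in>UNIV. \<pi>' (x, z)) = \<mu> x" for x
    proof -
      have "(\<Sum>z\<in>UNIV. \<pi>' (x, z)) = (\<Sum>z\<in>UNIV. \<pi> (x, z)) - (\<Sum>z\<in>UNIV. if x = y \<and> z = y then D else 0)
          - (\<Sum>z\<in>UNIV. if z = y then \<alpha> x * (e / Iin) else 0) - (\<Sum>z\<in>UNIV. if x = y then \<beta> z * (e / Iout) else 0)
          + (\<Sum>z\<in>UNIV. \<alpha> x * \<beta> z * (e / (Iin * Iout)))"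
        by (simp add: \<pi>'_def sum_subtractf sum.distrib)
      also have "(\<Sum>z\<in>UNIV. if x = y \<and> z = y then D else 0) = (if x = y then D else 0)"
        by (cases "x = y") simp_all
      also have "(\<Sum>z\<in>UNIV. if z = y then \<alpha> x * (e / Iin) else 0) = \<alpha> x * (e / Iin)"
        by simp
      also have "(\<Sum>z\<in>UNIV. if x = y then \<beta> z * (e / Iout) else 0) = (if x = y then Iout * (e / Iout) else 0)"
      proof (cases "x = y")
        case True
        then show ?thesis by (simp only: simp_thms if_True sum_mult2_r s\<beta>)
      qed simp
      also have "(\<Sum>z\<in>UNIV. \<alpha> x * \<beta> z * (e / (Iin * Iout))) = \<alpha> x * Iout * (e / (Iin * Iout))"
        by (simp only: sum_mult3_mid s\<beta>)
      finally show ?thesis using row[of x] Iin Iout by (cases "x = y") (simp_all add: e_def \<alpha>_def field_simps)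
    qed
    have cl: "(\<Sum>x\<in>UNIV. \<pi>' (x, z)) = \<nu> z" for z
    proof -
      have "(\<Sum>x\<in>UNIV. \<pi>' (x, z)) = (\<Sum>x\<in>UNIV. \<pi> (x, z)) - (\<Sum>x\<in>UNIV. if x = y \<and> z = y then D else 0)
          - (\<Sum>x\<in>UNIV. if z = y then \<alpha> x * (e / Iin) else 0) - (\<Sum>x\<in>UNIV. if x = y then \<beta> z * (e / Iout) else 0)
          + (\<Sum>x\<in>UNIV. \<alpha> x * \<beta> z * (e / (Iin * Iout)))"
        by (simp add: \<pi>'_def sum_subtractf sum.distrib)
      also have "(\<Sum>x\<in>UNIV. if x = y \<and> z = y then D else 0) = (if z = y then D else 0)"
        by (cases "z = y") simp_all
      also have "(\<Sum>x\<in>UNIV. if z = y then \<alpha> x * (e / Iin) else 0) = (if z = y then Iin * (e / Iin) else 0)"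
      proof (cases "z = y")
        case True
        then show ?thesis by (simp only: simp_thms if_True sum_mult2_r s\<alpha>)
      qed simp
      also have "(\<Sum>x\<in>UNIV. if x = y then \<beta> z * (e / Iout) else 0) = \<beta> z * (e / Iout)"
        by simp
      also have "(\<Sum>x\<in>UNIV. \<alpha> x * \<beta> z * (e / (Iin * Iout))) = Iin * \<beta> z * (e / (Iin * Iout))"
        by (simp only: sum_mult3_left s\<alpha>)
      finally show ?thesis using col[of z] Iin Iout by (cases "z = y") (simp_all add: e_def \<beta>_def field_simps)
    qed
    have cst: "cost d \<pi>' \<le> cost d \<pi>"
    proof -
      define A where "A = (\<Sum>x\<in>UNIV. \<alpha> x * d x y)"
      define B where "B = (\<Sum>z\<in>UNIV. \<beta> z * d y z)"
      have "cost d \<pi>' = cost d \<pi> - (\<Sum>x\<in>UNIV. \<Sum>z\<in>UNIV. d x z * (if x = y \<and> z = y then D else 0))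
          - (\<Sum>x\<in>UNIV. \<Sum>z\<in>UNIV. d x z * (if z = y then \<alpha> x * (e / Iin) else 0))
          - (\<Sum>x\<in>UNIV. \<Sum>z\<in>UNIV. d x z * (if x = y then \<beta> z * (e / Iout) else 0))
          + (\<Sum>x\<in>UNIV. \<Sum>z\<in>UNIV. d x z * (\<alpha> x * \<beta> z * (e / (Iin * Iout))))"
        unfolding cost_double by (simp add: \<pi>'_def right_diff_distrib distrib_left sum_subtractf sum.distrib)
      also have "(\<Sum>x\<in>UNIV. \<Sum>z\<in>UNIV. d x z * (if x = y \<and> z = y then D else 0)) = 0"
      proof -
        have "(\<Sum>z\<in>UNIV. d x z * (if x = y \<and> z = y then D else 0)) = 0" for x
          using d0 by (cases "x = y") (simp_all add: if_distrib cong: if_cong)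
        then show ?thesis by simp
      qed
      also have "(\<Sum>x\<in>UNIV. \<Sum>z\<in>UNIV. d x z * (if z = y then \<alpha> x * (e / Iin) else 0)) = (e / Iin) * A"
        by (simp add: if_distrib A_def sum_distrib_left mult_ac cong: if_cong)
      also have "(\<Sum>x\<in>UNIV. \<Sum>z\<in>UNIV. d x z * (if x = y then \<beta> z * (e / Iout) else 0)) = (e / Iout) * B"
      proof -
        have "(\<Sum>z\<in>UNIV. d x z * (if x = y then \<beta> z * (e / Iout) else 0)) = (if x = y then (e / Iout) * B else 0)" for x
          by (cases "x = y") (simp_all add: B_def sum_distrib_left mult_ac)
        then show ?thesis by simp
      qed
      also have "(\<Sum>x\<in>UNIV. \<Sum>z\<in>UNIV. d x z * (\<alpha> x * \<beta> z * (e / (Iin * Iout)))) \<le> (e / Iin) * A + (e / Iout) * B"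
      proof -
        have "(\<Sum>x\<in>UNIV. \<Sum>z\<in>UNIV. d x z * (\<alpha> x * \<beta> z * (e / (Iin * Iout))))
            \<le> (\<Sum>x\<in>UNIV. \<Sum>z\<in>UNIV. (d x y + d y z) * (\<alpha> x * \<beta> z * (e / (Iin * Iout))))"
        proof (intro sum_mono mult_right_mono tri)
          fix x z show "0 \<le> \<alpha> x * \<beta> z * (e / (Iin * Iout))" using \<alpha>0 \<beta>0 e0 Iin Iout by simp
        qed
        also have "\<dots> = (e / (Iin * Iout)) * ((\<Sum>x\<in>UNIV. \<alpha> x * d x y) * (\<Sum>z\<in>UNIV. \<beta> z)
              + (\<Sum>x\<in>UNIV. \<alpha> x) * (\<Sum>z\<in>UNIV. \<beta> z * d y z))"
        proof -
          define k where "k = e / (Iin * Iout)"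
          have "(\<Sum>x\<in>UNIV. \<Sum>z\<in>UNIV. (d x y + d y z) * (\<alpha> x * \<beta> z * k))
              = (\<Sum>x\<in>UNIV. \<Sum>z\<in>UNIV. (\<alpha> x * d x y) * \<beta> z * k) + (\<Sum>x\<in>UNIV. \<Sum>z\<in>UNIV. (\<beta> z * d y z) * \<alpha> x * k)"
            by (simp add: sum.distrib algebra_simps)
          also have "(\<Sum>x\<in>UNIV. \<Sum>z\<in>UNIV. (\<alpha> x * d x y) * \<beta> z * k) = (\<Sum>x\<in>UNIV. \<alpha> x * d x y) * (\<Sum>z\<in>UNIV. \<beta> z) * k"
            by (simp only: sum_mult3_mid sum_mult3_left)
          also have "(\<Sum>x\<in>UNIV. \<Sum>z\<in>UNIV. (\<beta> z * d y z) * \<alpha> x * k) = (\<Sum>z\<in>UNIV. \<Sum>x\<in>UNIV. (\<beta> z * d y z) * \<alpha> x * k)"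
            by (rule sum.swap)
          also have "\<dots> = (\<Sum>z\<in>UNIV. \<beta> z * d y z) * (\<Sum>x\<in>UNIV. \<alpha> x) * k"
            by (simp only: sum_mult3_mid sum_mult3_left)
          finally show ?thesis unfolding k_def by (simp add: algebra_simps)
        qed
        also have "\<dots> = (e / Iin) * A + (e / Iout) * B"
          using Iin Iout by (simp add: s\<alpha> s\<beta> A_def B_def field_simps)
        finally show ?thesis .
      qed
      finally show ?thesis by simp
    qed
    have "\<pi>' \<in> couplings \<mu> \<nu>" unfolding couplings_def using nn r cl by auto
    then show ?thesis using cst by blast
  qed
qed

lemma flow_coupling:
  fixes lo hi :: "'e::finite \<Rightarrow> 'v::finite" and d :: "'v \<Rightarrow> 'v \<Rightarrow> real"
  assumes lohi: "\<forall>k. lo k \<noteq> hi k"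
    and tri: "\<And>x y z. d x z \<le> d x y + d y z" and d0: "\<And>x. d x x = 0"
    and d1: "\<And>k. d (lo k) (hi k) \<le> 1" "\<And>k. d (hi k) (lo k) \<le> 1"
  shows "card {k. J k \<noteq> 0} = n \<Longrightarrow> \<forall>x. 0 \<le> \<mu> x \<Longrightarrow> \<forall>x. 0 \<le> \<nu> x \<Longrightarrow>
     \<forall>x. \<nu> x - \<mu> x = (\<Sum>k\<in>UNIV. incidence lo hi x k * J k) \<Longrightarrow>
     \<exists>\<pi>\<in>couplings \<mu> \<nu>. cost d \<pi> \<le> (\<Sum>k\<in>UNIV. \<bar>J k\<bar>)"
proof (induction n arbitrary: \<mu> \<nu> J)
  case 0
  then have J0: "\<And>k. J k = 0" by simp
  then have eq: "\<And>x. \<nu> x = \<mu> x" using "0.prems"(4) by simp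
  define \<pi> where "\<pi> = (\<lambda>(x, z). if x = z then \<mu> x else (0::real))"
  have "\<pi> \<in> couplings \<mu> \<nu>"
    unfolding couplings_def \<pi>_def using "0.prems"(2) eq by (auto simp: if_distrib cong: if_cong)
  moreover have "cost d \<pi> = 0"
  proof -
    have "(\<Sum>z\<in>UNIV. d x z * (if x = z then \<mu> x else 0)) = 0" for x
      using d0 by (simp add: if_distrib cong: if_cong)
    then show ?thesis unfolding cost_double \<pi>_def by simp
  qed
  ultimately show ?case by (metis abs_ge_zero sum_nonneg)
next
  case (Suc n)
  have "{k. J k \<noteq> 0} \<noteq> {}" using Suc.prems(1) by (metis card.empty Zero_not_Suc)
  then obtain k where Jk: "J k \<noteq> 0" by auto
  define J' where "J' = J(k := 0)"
  have "{l. J' l \<noteq> 0} = {l. J l \<noteq> 0} - {k}" by (auto simp: J'_def)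
  then have card': "card {l. J' l \<noteq> 0} = n" using Suc.prems(1) Jk by simp
  define c where "c = \<bar>J k\<bar>"
  have c0: "0 \<le> c" by (simp add: c_def)
  obtain a b where dab: "d a b \<le> 1" and incJ: "\<And>x. incidence lo hi x k * J k = c * ((if x = b then 1 else 0) - (if x = a then 1 else 0))"
  proof (cases "J k > 0")
    case True
    have "incidence lo hi x k * J k = c * ((if x = hi k then 1 else 0) - (if x = lo k then 1 else 0))" for x
      using True lohi[rule_format, of k] by (auto simp: incidence_def c_def)
    then show ?thesis using that[of "lo k" "hi k"] d1 by blast
  next
    case False
    then have "J k < 0" using Jk by simp
    then have "incidence lo hi x k * J k = c * ((if x = lo k then 1 else 0) - (if x = hi k then 1 else 0))" for x
      using lohi[rule_format, of k] by (auto simp: incidence_def c_def)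
    then show ?thesis using that[of "hi k" "lo k"] d1 by blast
  qed
  have sumJ: "(\<Sum>l\<in>UNIV. incidence lo hi x l * J l) = incidence lo hi x k * J k + (\<Sum>l\<in>UNIV. incidence lo hi x l * J' l)" for x
  proof -
    have "(\<Sum>l\<in>UNIV. incidence lo hi x l * J l) = incidence lo hi x k * J k + (\<Sum>l\<in>UNIV - {k}. incidence lo hi x l * J l)"
      by (rule sum.remove) simp_all
    moreover have "(\<Sum>l\<in>UNIV. incidence lo hi x l * J' l) = (\<Sum>l\<in>UNIV - {k}. incidence lo hi x l * J l)"
    proof -
      have "(\<Sum>l\<in>UNIV. incidence lo hi x l * J' l) = incidence lo hi x k * J' k + (\<Sum>l\<in>UNIV - {k}. incidence lo hi x l * J' l)"
        by (rule sum.remove) simp_all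
      also have "(\<Sum>l\<in>UNIV - {k}. incidence lo hi x l * J' l) = (\<Sum>l\<in>UNIV - {k}. incidence lo hi x l * J l)"
        by (rule sum.cong) (simp_all add: J'_def)
      finally show ?thesis by (simp add: J'_def)
    qed
    ultimately show ?thesis by simp
  qed
  have sumA: "(\<Sum>l\<in>UNIV. \<bar>J l\<bar>) = c + (\<Sum>l\<in>UNIV. \<bar>J' l\<bar>)"
  proof -
    have "(\<Sum>l\<in>UNIV. \<bar>J l\<bar>) = \<bar>J k\<bar> + (\<Sum>l\<in>UNIV - {k}. \<bar>J l\<bar>)"
      by (rule sum.remove) simp_all
    moreover have "(\<Sum>l\<in>UNIV. \<bar>J' l\<bar>) = (\<Sum>l\<in>UNIV - {k}. \<bar>J l\<bar>)"
    proof -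
      have "(\<Sum>l\<in>UNIV. \<bar>J' l\<bar>) = \<bar>J' k\<bar> + (\<Sum>l\<in>UNIV - {k}. \<bar>J' l\<bar>)"
        by (rule sum.remove) simp_all
      also have "(\<Sum>l\<in>UNIV - {k}. \<bar>J' l\<bar>) = (\<Sum>l\<in>UNIV - {k}. \<bar>J l\<bar>)"
        by (rule sum.cong) (simp_all add: J'_def)
      finally show ?thesis by (simp add: J'_def)
    qed
    ultimately show ?thesis by (simp add: c_def)
  qed
  define \<mu>b where "\<mu>b x = \<mu> x + (if x = b then c else 0)" for x
  define \<nu>a where "\<nu>a x = \<nu> x + (if x = a then c else 0)" for x
  define \<nu>b where "\<nu>b x = \<nu> x + (if x = b then c else 0)" for x
  have "\<forall>x. \<nu>a x - \<mu>b x = (\<Sum>l\<in>UNIV. incidence lo hi x l * J' l)"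
  proof
    fix x show "\<nu>a x - \<mu>b x = (\<Sum>l\<in>UNIV. incidence lo hi x l * J' l)"
      using Suc.prems(4)[rule_format, of x] sumJ[of x] incJ[of x]
      by (simp add: \<nu>a_def \<mu>b_def algebra_simps split: if_splits)
  qed
  moreover have "\<forall>x. 0 \<le> \<mu>b x" "\<forall>x. 0 \<le> \<nu>a x" "\<forall>x. 0 \<le> \<nu>b x"
    using Suc.prems(2,3) c0 by (auto simp: \<mu>b_def \<nu>a_def \<nu>b_def)
  ultimately obtain \<pi>0 where \<pi>0: "\<pi>0 \<in> couplings \<mu>b \<nu>a" and c\<pi>0: "cost d \<pi>0 \<le> (\<Sum>l\<in>UNIV. \<bar>J' l\<bar>)"
    using Suc.IH[OF card'] by blast
  define \<pi>1 where "\<pi>1 z = \<pi>0 z + (if z = (a, b) then c else 0)" for z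
  have \<pi>1: "\<pi>1 \<in> couplings (\<lambda>x. \<mu>b x + (if x = a then c else 0)) (\<lambda>x. \<nu>b x + (if x = a then c else 0))"
  proof -
    have r: "(\<Sum>z\<in>UNIV. \<pi>0 (x, z)) = \<mu>b x" and cl: "(\<Sum>z\<in>UNIV. \<pi>0 (z, x)) = \<nu>a x" for x
      using \<pi>0 unfolding couplings_def by auto
    have nn: "0 \<le> \<pi>0 z" for z using \<pi>0 unfolding couplings_def mem_Collect_eq by blast
    have "(\<Sum>z\<in>UNIV. \<pi>1 (x, z)) = \<mu>b x + (if x = a then c else 0)" for x
    proof -
      have "(\<Sum>z\<in>UNIV. \<pi>1 (x, z)) = (\<Sum>z\<in>UNIV. \<pi>0 (x, z)) + (\<Sum>z\<in>UNIV. if x = a \<and> z = b then c else 0)"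
        by (simp add: \<pi>1_def sum.distrib)
      also have "(\<Sum>z\<in>UNIV. if x = a \<and> z = b then c else 0) = (if x = a then c else 0)"
        by (cases "x = a") simp_all
      finally show ?thesis using r by simp
    qed
    moreover have "(\<Sum>z\<in>UNIV. \<pi>1 (z, x)) = \<nu>b x + (if x = a then c else 0)" for x
    proof -
      have "(\<Sum>z\<in>UNIV. \<pi>1 (z, x)) = (\<Sum>z\<in>UNIV. \<pi>0 (z, x)) + (\<Sum>z\<in>UNIV. if z = a \<and> x = b then c else 0)"
        by (simp add: \<pi>1_def sum.distrib)
      also have "(\<Sum>z\<in>UNIV. if z = a \<and> x = b then c else 0) = (if x = b then c else 0)"
        by (cases "x = b") simp_all
      finally show ?thesis using cl by (simp add: \<nu>a_def \<nu>b_def)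
    qed
    moreover have "0 \<le> \<pi>1 z" for z using nn[of z] c0 by (simp add: \<pi>1_def)
    ultimately show ?thesis unfolding couplings_def by auto
  qed
  have c\<pi>1: "cost d \<pi>1 \<le> (\<Sum>l\<in>UNIV. \<bar>J l\<bar>)"
  proof -
    have "cost d \<pi>1 = cost d \<pi>0 + (\<Sum>z\<in>UNIV. d (fst z) (snd z) * (if z = (a, b) then c else 0))"
      by (simp add: cost_def \<pi>1_def distrib_left sum.distrib)
    also have "(\<Sum>z\<in>UNIV. d (fst z) (snd z) * (if z = (a, b) then c else 0)) = d a b * c"
      by (simp add: if_distrib cong: if_cong)
    also have "d a b * c \<le> c" using mult_right_mono[OF dab c0] by simp
    finally show ?thesis using c\<pi>0 sumA by simp
  qed
  obtain \<pi>2 where \<pi>2: "\<pi>2 \<in> couplings \<mu>b \<nu>b" and c\<pi>2: "cost d \<pi>2 \<le> cost d \<pi>1"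
    using cancel_one[where d=d and \<mu>=\<mu>b and \<nu>=\<nu>b and c=c and y=a, OF tri d0 _ _ c0 \<pi>1]
      \<open>\<forall>x. 0 \<le> \<mu>b x\<close> \<open>\<forall>x. 0 \<le> \<nu>b x\<close> by blast
  have \<pi>2': "\<pi>2 \<in> couplings (\<lambda>x. \<mu> x + (if x = b then c else 0)) (\<lambda>x. \<nu> x + (if x = b then c else 0))"
    using \<pi>2 unfolding \<mu>b_def[abs_def] \<nu>b_def[abs_def] .
  obtain \<pi>3 where \<pi>3: "\<pi>3 \<in> couplings \<mu> \<nu>" and c\<pi>3: "cost d \<pi>3 \<le> cost d \<pi>2"
    using cancel_one[where d=d and \<mu>=\<mu> and \<nu>=\<nu> and c=c and y=b, OF tri d0 _ _ c0 \<pi>2']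
      Suc.prems(2,3) by blast
  have "cost d \<pi>3 \<le> (\<Sum>l\<in>UNIV. \<bar>J l\<bar>)" using c\<pi>3 c\<pi>2 c\<pi>1 by linarith
  then show ?case using \<pi>3 by blast
qed

lemma opt_coupling:
  fixes \<mu> \<nu> :: "'v::finite \<Rightarrow> real" and d :: "'v \<Rightarrow> 'v \<Rightarrow> real"
  assumes \<mu>: "\<mu> \<in> prob_vecs" and \<nu>: "\<nu> \<in> prob_vecs"
  shows "\<exists>\<pi>\<in>couplings \<mu> \<nu>. \<forall>\<pi>'\<in>couplings \<mu> \<nu>. cost d \<pi> \<le> cost d \<pi>'"
proof -
  define K where "K = {x :: real^('v\<times>'v). (\<lambda>z. x $ z) \<in> couplings \<mu> \<nu>}"
  have Keq: "K = (\<Inter>z. {x. 0 \<le> x $ z}) \<inter> (\<Inter>a. {x. (\<Sum>b\<in>UNIV. x $ (a, b)) = \<mu> a})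
      \<inter> (\<Inter>b. {x. (\<Sum>a\<in>UNIV. x $ (a, b)) = \<nu> b})"
    unfolding K_def couplings_def by auto
  have "closed K" unfolding Keq
    by (intro closed_Int closed_INT ballI closed_Collect_le closed_Collect_eq continuous_intros)
  moreover have "bounded K"
  proof -
    have "norm x \<le> real CARD('v\<times>'v)" if "x \<in> K" for x
    proof -
      have cp: "(\<lambda>z. x $ z) \<in> couplings \<mu> \<nu>" using that by (simp add: K_def)
      have "\<bar>x $ z\<bar> \<le> 1" for z
      proof -
        obtain a b where z: "z = (a, b)" by fastforce
        have nn: "\<And>w. 0 \<le> x $ w" using cp unfolding couplings_def by auto
        have "x $ (a, b) \<le> (\<Sum>b'\<in>UNIV. x $ (a, b'))"
          by (rule member_le_sum) (use nn in auto)
        also have "\<dots> = \<mu> a" using cp unfolding couplings_def by auto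
        also have "\<mu> a \<le> (\<Sum>a'\<in>UNIV. \<mu> a')"
          by (rule member_le_sum) (use \<mu> in \<open>auto simp: prob_vecs_def\<close>)
        also have "\<dots> = 1" using \<mu> by (simp add: prob_vecs_def)
        finally show ?thesis using nn[of z] z by simp
      qed
      then have "(\<Sum>i\<in>UNIV. \<bar>x $ i\<bar>) \<le> (\<Sum>i\<in>(UNIV::('v\<times>'v) set). 1)"
        by (intro sum_mono) auto
      then show ?thesis using norm_le_l1_cart[of x] by simp
    qed
    then show ?thesis unfolding bounded_iff by blast
  qed
  ultimately have "compact K" using compact_eq_bounded_closed by blast
  moreover have "K \<noteq> {}"
  proof -
    define x :: "real^('v\<times>'v)" where "x = (\<chi> z. \<mu> (fst z) * \<nu> (snd z))"
    have "(\<lambda>z. x $ z) \<in> couplings \<mu> \<nu>"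
      using \<mu> \<nu> unfolding couplings_def prob_vecs_def x_def
      by (auto simp flip: sum_distrib_left sum_distrib_right)
    then show ?thesis unfolding K_def by blast
  qed
  moreover have "continuous_on K (\<lambda>x. cost d (\<lambda>z. x $ z))"
    unfolding cost_def by (intro continuous_intros)
  ultimately obtain x0 where x0: "x0 \<in> K" and min: "\<And>y. y \<in> K \<Longrightarrow> cost d (\<lambda>z. x0 $ z) \<le> cost d (\<lambda>z. y $ z)"
    using continuous_attains_inf[of K "\<lambda>x. cost d (\<lambda>z. x $ z)"] by blast
  show ?thesis
  proof (intro bexI ballI)
    show "(\<lambda>z. x0 $ z) \<in> couplings \<mu> \<nu>" using x0 by (simp add: K_def)
    fix \<pi>' assume \<pi>': "\<pi>' \<in> couplings \<mu> \<nu>"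
    have "vec_nth (vec_lambda \<pi>') = \<pi>'" by (rule ext) simp
    then have "(\<chi> z. \<pi>' z) \<in> K" using \<pi>' by (simp add: K_def)
    from min[OF this] show "cost d (\<lambda>z. x0 $ z) \<le> cost d \<pi>'" by simp
  qed
qed

lemma young_aux:
  fixes q A y :: real
  assumes q: "q \<ge> 1" and A: "A > 0" and y: "y \<ge> 0"
  shows "y \<le> A powr (1 - q) / q * y powr q + A * (q - 1) / q"
proof (cases "q = 1")
  case True
  then show ?thesis using y A by simp
next
  case False
  then have q1: "q > 1" using q by simp
  define a where "a = y * A powr ((1 - q) / q)"
  define b where "b = A powr ((q - 1) / q)"
  have a0: "a \<ge> 0" and b0: "b \<ge> 0" using y by (simp_all add: a_def b_def)
  have conj: "1 / q + 1 / (q / (q - 1)) = 1" using q1 by (simp add: field_simps)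
  have "a * b \<le> a powr q / q + b powr (q / (q - 1)) / (q / (q - 1))"
    by (rule Youngs_inequality[OF q1 _ conj a0 b0]) (use q1 in simp)
  moreover have "a * b = y"
  proof -
    have "a * b = y * (A powr ((1 - q) / q) * A powr ((q - 1) / q))" by (simp add: a_def b_def)
    also have "A powr ((1 - q) / q) * A powr ((q - 1) / q) = A powr ((1 - q) / q + (q - 1) / q)"
      by (simp add: powr_add)
    also have "(1 - q) / q + (q - 1) / q = 0"
    proof -
      have "(1 - q) / q + (q - 1) / q = ((1 - q) + (q - 1)) / q" by (rule add_divide_distrib[symmetric])
      then show ?thesis by simp
    qed
    finally show ?thesis using A by simp
  qed
  moreover have "a powr q = y powr q * A powr (1 - q)"
  proof -
    have "a powr q = y powr q * (A powr ((1 - q) / q)) powr q"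
      using y A by (simp add: a_def powr_mult)
    also have "(A powr ((1 - q) / q)) powr q = A powr (1 - q)"
      using q1 by (simp add: powr_powr)
    finally show ?thesis .
  qed
  moreover have "b powr (q / (q - 1)) = A"
  proof -
    have "b powr (q / (q - 1)) = A powr ((q - 1) / q * (q / (q - 1)))"
      by (simp add: b_def powr_powr)
    also have "(q - 1) / q * (q / (q - 1)) = 1" using q1 by (simp add: field_simps)
    finally show ?thesis using A by simp
  qed
  ultimately have "y \<le> y powr q * A powr (1 - q) / q + A / (q / (q - 1))" by simp
  also have "A / (q / (q - 1)) = A * (q - 1) / q" using q1 by (simp add: field_simps)
  finally show ?thesis by (simp add: field_simps)
qed

lemma powr_from_young:
  fixes q W I :: real
  assumes q: "q \<ge> 1" and W: "W > 0" and I: "I \<ge> 0"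
    and le: "W \<le> W powr (1 - q) / q * I + W * (q - 1) / q"
  shows "W \<le> I powr (1 / q)"
proof -
  have "q * W \<le> W powr (1 - q) * I + W * (q - 1)"
    using le q by (simp add: field_simps)
  then have "W \<le> W powr (1 - q) * I" by (simp add: algebra_simps)
  then have "W powr (q - 1) * W \<le> W powr (q - 1) * (W powr (1 - q) * I)"
    using W by (intro mult_left_mono) simp_all
  also have "W powr (q - 1) * (W powr (1 - q) * I) = I"
    using W by (simp add: powr_add[symmetric] mult.assoc[symmetric])
  also have "W powr (q - 1) * W = W powr q"
    using powr_add[of W "q - 1" 1] W by simp
  finally have Wq: "W powr q \<le> I" .
  have "W = (W powr q) powr (1 / q)" using W q by (simp add: powr_powr)
  also have "\<dots> \<le> I powr (1 / q)" using Wq q W by (intro powr_mono2) simp_all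
  finally show ?thesis .
qed

lemma AC_affine:
  "absolutely_continuous_real_on (\<lambda>t. a + t * b) 0 1"
  unfolding absolutely_continuous_real_on_def
proof (intro allI impI)
  fix \<epsilon> :: real assume e: "\<epsilon> > 0"
  define \<delta> where "\<delta> = \<epsilon> / (\<bar>b\<bar> + 1)"
  have d: "\<delta> > 0" using e by (simp add: \<delta>_def)
  show "\<exists>\<delta>>0. \<forall>(n::nat) c d. (\<forall>i<n. 0 \<le> c i \<and> c i \<le> d i \<and> d i \<le> 1) \<and>
          (\<forall>i<n. \<forall>j<n. i \<noteq> j \<longrightarrow> {c i<..<d i} \<inter> {c j<..<d j} = {}) \<and> (\<Sum>i<n. d i - c i) < \<delta> \<longrightarrow>
          (\<Sum>i<n. \<bar>a + d i * b - (a + c i * b)\<bar>) < \<epsilon>"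
  proof (intro exI[of _ \<delta>] conjI allI impI d)
    fix n :: nat and c dd :: "nat \<Rightarrow> real"
    assume H: "(\<forall>i<n. 0 \<le> c i \<and> c i \<le> dd i \<and> dd i \<le> 1) \<and>
          (\<forall>i<n. \<forall>j<n. i \<noteq> j \<longrightarrow> {c i<..<dd i} \<inter> {c j<..<dd j} = {}) \<and> (\<Sum>i<n. dd i - c i) < \<delta>"
    have "(\<Sum>i<n. \<bar>a + dd i * b - (a + c i * b)\<bar>) = (\<Sum>i<n. \<bar>b\<bar> * (dd i - c i))"
    proof (rule sum.cong)
      fix i assume "i \<in> {..<n}"
      then have ci: "c i \<le> dd i" using H by auto
      have "a + dd i * b - (a + c i * b) = b * (dd i - c i)" by (simp add: algebra_simps)
      then show "\<bar>a + dd i * b - (a + c i * b)\<bar> = \<bar>b\<bar> * (dd i - c i)" using ci by (simp add: abs_mult)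
    qed simp
    also have "\<dots> = \<bar>b\<bar> * (\<Sum>i<n. dd i - c i)" by (simp add: sum_distrib_left)
    also have "\<dots> \<le> \<bar>b\<bar> * \<delta>" using H by (intro mult_left_mono) auto
    also have "\<dots> < \<epsilon>" using e by (simp add: \<delta>_def field_simps)
    finally show "(\<Sum>i<n. \<bar>a + dd i * b - (a + c i * b)\<bar>) < \<epsilon>" .
  qed
qed

lemma division_AC_bound:
  fixes f :: "real \<Rightarrow> real"
  assumes acd: "\<forall>(n::nat) (c::nat \<Rightarrow> real) (d::nat \<Rightarrow> real).
        (\<forall>i<n. a \<le> c i \<and> c i \<le> d i \<and> d i \<le> b) \<and>
        (\<forall>i<n. \<forall>j<n. i \<noteq> j \<longrightarrow> {c i<..<d i} \<inter> {c j<..<d j} = {}) \<and>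
        (\<Sum>i<n. d i - c i) < \<delta>
        \<longrightarrow> (\<Sum>i<n. \<bar>f (d i) - f (c i)\<bar>) < \<epsilon>"
    and p: "p tagged_division_of {a..b}" and p2: "p2 \<subseteq> p"
    and small: "(\<Sum>xK\<in>p2. Henstock_Kurzweil_Integration.content (snd xK)) < \<delta>"
  shows "(\<Sum>xK\<in>p2. \<bar>f (Sup (snd xK)) - f (Inf (snd xK))\<bar>) < \<epsilon>"
proof -
  have finp2: "finite p2" using p p2 finite_subset by blast
  obtain en where en: "bij_betw en {0..<card p2} p2" using ex_bij_betw_nat_finite[OF finp2] by blast
  define n where "n = card p2"
  have en': "bij_betw en {..<n} p2" using en by (simp add: n_def atLeast0LessThan)
  define c where "c i = Inf (snd (en i))" for i
  define d where "d i = Sup (snd (en i))" for i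
  have props: "\<exists>u v. snd (en i) = {u..v} \<and> u \<le> v \<and> a \<le> u \<and> v \<le> b \<and> en i \<in> p" if "i < n" for i
  proof -
    have "i \<in> {..<n}" using that by simp
    then have ei: "en i \<in> p2" by (rule bij_betw_apply[OF en'])
    then have ep: "en i \<in> p" using p2 by blast
    obtain x K where xK: "en i = (x, K)" by (cases "en i")
    have epK: "(x, K) \<in> p" using ep xK by simp
    obtain u v where K: "K = cbox u v" using tagged_division_ofD(4)[OF p epK] by blast
    have xK1: "x \<in> K" using tagged_division_ofD(2)[OF p epK] .
    have xK2: "K \<subseteq> {a..b}" using tagged_division_ofD(3)[OF p epK] .
    have Kuv: "K = {u..v}" using K by simp
    have uv: "u \<le> v" using xK1 Kuv by simp
    have "u \<in> K" "v \<in> K" using Kuv uv by simp_all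
    then have "u \<in> {a..b}" "v \<in> {a..b}" using xK2 by blast+
    then have "a \<le> u" "v \<le> b" by simp_all
    then show ?thesis using Kuv uv xK ep by (intro exI[of _ u] exI[of _ v]) simp
  qed
  have cdi: "c i = u \<and> d i = v" if "snd (en i) = {u..v}" "u \<le> v" for i u v
    using that by (simp add: c_def d_def)
  have cd: "\<forall>i<n. a \<le> c i \<and> c i \<le> d i \<and> d i \<le> b"
  proof (intro allI impI)
    fix i assume "i < n"
    then obtain u v where uv: "snd (en i) = {u..v}" "u \<le> v" "a \<le> u" "v \<le> b" using props by blast
    then show "a \<le> c i \<and> c i \<le> d i \<and> d i \<le> b" using cdi[OF uv(1,2)] by simp
  qed
  have disj: "\<forall>i<n. \<forall>j<n. i \<noteq> j \<longrightarrow> {c i<..<d i} \<inter> {c j<..<d j} = {}"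
  proof (intro allI impI)
    fix i j assume ij: "i < n" "j < n" "i \<noteq> j"
    have inj: "inj_on en {..<n}" using en' by (rule bij_betw_imp_inj_on)
    have ij': "i \<in> {..<n}" "j \<in> {..<n}" using ij by simp_all
    have neq: "en i \<noteq> en j"
    proof
      assume "en i = en j"
      then have "i = j" by (rule inj_onD[OF inj _ ij'])
      then show False using ij by simp
    qed
    obtain u v where uv: "snd (en i) = {u..v}" "u \<le> v" "en i \<in> p" using props ij by blast
    obtain u' v' where uv': "snd (en j) = {u'..v'}" "u' \<le> v'" "en j \<in> p" using props ij by blast
    obtain x K where xK: "en i = (x, K)" by (cases "en i")
    obtain x' K' where xK': "en j = (x', K')" by (cases "en j")
    have "(x, K) \<in> p" "(x', K') \<in> p" "(x, K) \<noteq> (x', K')" using uv uv' neq xK xK' by simp_all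
    then have "interior K \<inter> interior K' = {}" by (rule tagged_division_ofD(5)[OF p])
    moreover have "K = {u..v}" "K' = {u'..v'}" using uv uv' xK xK' by simp_all
    ultimately show "{c i<..<d i} \<inter> {c j<..<d j} = {}" using cdi[OF uv(1,2)] cdi[OF uv'(1,2)] by simp
  qed
  have sum_len: "(\<Sum>i<n. d i - c i) = (\<Sum>xK\<in>p2. Henstock_Kurzweil_Integration.content (snd xK))"
  proof -
    have "(\<Sum>i<n. d i - c i) = (\<Sum>i<n. Henstock_Kurzweil_Integration.content (snd (en i)))"
    proof (rule sum.cong)
      fix i assume "i \<in> {..<n}"
      then obtain u v where uv: "snd (en i) = {u..v}" "u \<le> v" using props by blast
      then show "d i - c i = Henstock_Kurzweil_Integration.content (snd (en i))" using cdi[OF uv] by simp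
    qed simp
    also have "\<dots> = (\<Sum>xK\<in>p2. Henstock_Kurzweil_Integration.content (snd xK))"
      by (rule sum.reindex_bij_betw[OF en'])
    finally show ?thesis .
  qed
  have sum_D: "(\<Sum>i<n. \<bar>f (d i) - f (c i)\<bar>) = (\<Sum>xK\<in>p2. \<bar>f (Sup (snd xK)) - f (Inf (snd xK))\<bar>)"
  proof -
    have "(\<Sum>i<n. \<bar>f (d i) - f (c i)\<bar>) = (\<Sum>i<n. \<bar>f (Sup (snd (en i))) - f (Inf (snd (en i)))\<bar>)"
      by (simp add: c_def d_def)
    also have "\<dots> = (\<Sum>xK\<in>p2. \<bar>f (Sup (snd xK)) - f (Inf (snd xK))\<bar>)"
      by (rule sum.reindex_bij_betw[OF en'])
    finally show ?thesis .
  qed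
  have "(\<Sum>i<n. d i - c i) < \<delta>" using sum_len small by simp
  then have "(\<Sum>i<n. \<bar>f (d i) - f (c i)\<bar>) < \<epsilon>" using acd cd disj by blast
  then show ?thesis using sum_D by simp
qed



lemma AC_FTC_le:
  fixes f h :: "real \<Rightarrow> real"
  assumes ab: "a \<le> b" and ac: "absolutely_continuous_real_on f a b"
    and hint: "(h has_integral I) {a..b}"
    and N: "negligible N"
    and der: "\<And>t. t \<in> {a..b} - N \<Longrightarrow> (f has_real_derivative h t) (at t within {a..b})"
  shows "f b - f a \<le> I"
proof (rule field_le_epsilon)
  fix e :: real assume e: "0 < e"
  define \<epsilon> where "\<epsilon> = e / (b - a + 2)"
  have \<epsilon>: "\<epsilon> > 0" using e ab by (simp add: \<epsilon>_def)
  have e_eq0: "\<epsilon> * (b - a + 2) = e" using ab by (simp add: \<epsilon>_def)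
  have e_eq: "\<epsilon> + \<epsilon> * (b - a) + \<epsilon> = e" using e_eq0 by (simp add: algebra_simps)
  obtain \<delta> where \<delta>: "\<delta> > 0" and acd: "\<forall>(n::nat) (c::nat \<Rightarrow> real) (d::nat \<Rightarrow> real).
        (\<forall>i<n. a \<le> c i \<and> c i \<le> d i \<and> d i \<le> b) \<and>
        (\<forall>i<n. \<forall>j<n. i \<noteq> j \<longrightarrow> {c i<..<d i} \<inter> {c j<..<d j} = {}) \<and>
        (\<Sum>i<n. d i - c i) < \<delta>
        \<longrightarrow> (\<Sum>i<n. \<bar>f (d i) - f (c i)\<bar>) < \<epsilon>"
    using ac \<epsilon> unfolding absolutely_continuous_real_on_def by blast
  define h' where "h' t = (if t \<in> N then 0 else h t)" for t
  have h'int: "(h' has_integral I) {a..b}"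
    by (rule has_integral_spike[OF N _ hint]) (simp add: h'_def)
  define iN where "iN t = (if t \<in> N then 1 else 0::real)" for t
  have iNint: "(iN has_integral 0) {a..b}"
    by (rule has_integral_spike[OF N _ has_integral_0]) (simp add: iN_def)
  obtain \<gamma>1 where g1: "gauge \<gamma>1" and g1p: "\<And>p. p tagged_division_of {a..b} \<Longrightarrow> \<gamma>1 fine p \<Longrightarrow>
      norm (sum (\<lambda>(x,k). Henstock_Kurzweil_Integration.content k *\<^sub>R h' x) p - I) < \<epsilon>"
    using h'int \<epsilon> unfolding has_integral_real by meson
  obtain \<gamma>2 where g2: "gauge \<gamma>2" and g2p: "\<And>p. p tagged_division_of {a..b} \<Longrightarrow> \<gamma>2 fine p \<Longrightarrow>
      norm (sum (\<lambda>(x,k). Henstock_Kurzweil_Integration.content k *\<^sub>R iN x) p - 0) < \<delta>"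
    using iNint \<delta> unfolding has_integral_real by meson
  have rex: "\<forall>t\<in>{a..b} - N. \<exists>r>0. \<forall>s\<in>{a..b}. norm (s - t) < r \<longrightarrow>
          norm (f s - f t - h t * (s - t)) \<le> \<epsilon> * norm (s - t)"
  proof
    fix t assume t: "t \<in> {a..b} - N"
    have "(f has_derivative (\<lambda>x. h t * x)) (at t within {a..b})"
      using der[OF t] by (simp add: has_field_derivative_def)
    then show "\<exists>r>0. \<forall>s\<in>{a..b}. norm (s - t) < r \<longrightarrow>
          norm (f s - f t - h t * (s - t)) \<le> \<epsilon> * norm (s - t)"
      unfolding has_derivative_within_alt using \<epsilon> by (simp add: mult.commute)
  qed
  obtain r where r: "\<And>t. t \<in> {a..b} - N \<Longrightarrow> r t > 0 \<and> (\<forall>s\<in>{a..b}. norm (s - t) < r t \<longrightarrow>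
          norm (f s - f t - h t * (s - t)) \<le> \<epsilon> * norm (s - t))"
    using bchoice[OF rex] by blast
  define \<gamma> where "\<gamma> t = \<gamma>1 t \<inter> \<gamma>2 t \<inter> (if t \<in> {a..b} - N then ball t (r t) else UNIV)" for t
  have g: "gauge \<gamma>"
    using g1 g2 r unfolding gauge_def \<gamma>_def by auto
  obtain p where p: "p tagged_division_of {a..b}" and fp: "\<gamma> fine p"
    using fine_division_exists_real[OF g] by metis
  have fp1: "\<gamma>1 fine p" and fp2: "\<gamma>2 fine p" using fp unfolding fine_def \<gamma>_def by auto
  have finp: "finite p" using p by blast
  define D where "D = (\<lambda>(x::real, K::real set). f (Sup K) - f (Inf K))"
  have termb: "D (x, K) \<le> Henstock_Kurzweil_Integration.content K * h' x + \<epsilon> * Henstock_Kurzweil_Integration.content K + (if x \<in> N then \<bar>D (x, K)\<bar> else 0)"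
    if xK: "(x, K) \<in> p" for x K
  proof -
    obtain u v where K: "K = cbox u v" using p xK by blast
    have xK': "x \<in> K" and Kab: "K \<subseteq> {a..b}" using p xK by blast+
    then have uv: "u \<le> v" using K by auto
    have KK: "K = {u..v}" "Sup K = v" "Inf K = u" "Henstock_Kurzweil_Integration.content K = v - u" using K uv by auto
    show ?thesis
    proof (cases "x \<in> N")
      case True
      have "0 \<le> \<epsilon> * (v - u)" using uv \<epsilon> by simp
      moreover have "D (x, K) \<le> \<bar>D (x, K)\<bar>" by simp
      ultimately show ?thesis using True uv by (simp add: KK h'_def)
    next
      case False
      have xab: "x \<in> {a..b} - N" using False xK' Kab by auto
      have "K \<subseteq> \<gamma> x" using fp xK unfolding fine_def by auto
      then have Kb: "K \<subseteq> ball x (r x)" using xab unfolding \<gamma>_def by auto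
      have ux: "u \<le> x" "x \<le> v" using xK' KK by auto
      have uin: "u \<in> {a..b}" "v \<in> {a..b}" using Kab KK uv by auto
      have du: "norm (u - x) < r x" "norm (v - x) < r x" using Kb KK uv by (auto simp: dist_norm norm_minus_commute)
      have e1: "\<bar>f v - f x - h x * (v - x)\<bar> \<le> \<epsilon> * \<bar>v - x\<bar>"
        using r[OF xab] uin du by auto
      have e2: "\<bar>f u - f x - h x * (u - x)\<bar> \<le> \<epsilon> * \<bar>u - x\<bar>"
        using r[OF xab] uin du by auto
      have "f v - f u \<le> h x * (v - u) + \<epsilon> * (v - u)"
        using e1 e2 ux by (auto simp: abs_le_iff algebra_simps)
      then show ?thesis using False uv by (simp add: KK h'_def D_def mult.commute)
    qed
  qed
  have "f b - f a = (\<Sum>xK\<in>p. D xK)"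
    using additive_tagged_division_1[OF ab p, of f] by (simp add: D_def)
  also have "\<dots> \<le> (\<Sum>(x,K)\<in>p. Henstock_Kurzweil_Integration.content K * h' x + \<epsilon> * Henstock_Kurzweil_Integration.content K + (if x \<in> N then \<bar>D (x, K)\<bar> else 0))"
    by (rule sum_mono) (use termb in auto)
  also have "\<dots> = (\<Sum>(x,K)\<in>p. Henstock_Kurzweil_Integration.content K *\<^sub>R h' x) + \<epsilon> * (\<Sum>(x,K)\<in>p. Henstock_Kurzweil_Integration.content K)
        + (\<Sum>(x,K)\<in>p. (if x \<in> N then \<bar>D (x, K)\<bar> else 0))"
    by (simp add: sum.distrib sum_distrib_left case_prod_unfold)
  also have "(\<Sum>(x,K)\<in>p. Henstock_Kurzweil_Integration.content K) = b - a"
    using additive_content_tagged_division[of p a b] p ab by simp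
  also have "(\<Sum>(x,K)\<in>p. Henstock_Kurzweil_Integration.content K *\<^sub>R h' x) < I + \<epsilon>"
    using g1p[OF p fp1] by (simp add: abs_less_iff)
  also have "(\<Sum>(x,K)\<in>p. (if x \<in> N then \<bar>D (x, K)\<bar> else 0)) < \<epsilon>"
  proof -
    define p2 where "p2 = {xK\<in>p. fst xK \<in> N}"
    have finp2: "finite p2" using finp by (simp add: p2_def)
    have eq1: "(\<Sum>(x,K)\<in>p. (if x \<in> N then \<bar>D (x, K)\<bar> else 0)) = (\<Sum>xK\<in>p2. \<bar>D xK\<bar>)"
    proof -
      have "(\<Sum>(x,K)\<in>p. (if x \<in> N then \<bar>D (x, K)\<bar> else 0)) = (\<Sum>xK\<in>p. if fst xK \<in> N then \<bar>D xK\<bar> else 0)"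
        by (rule sum.cong) auto
      also have "\<dots> = (\<Sum>xK\<in>p2. \<bar>D xK\<bar>)"
        unfolding p2_def using finp by (simp add: sum.inter_filter)
      finally show ?thesis .
    qed
    have eq2: "(\<Sum>(x,K)\<in>p. Henstock_Kurzweil_Integration.content K *\<^sub>R iN x) = (\<Sum>xK\<in>p2. Henstock_Kurzweil_Integration.content (snd xK))"
    proof -
      have "(\<Sum>(x,K)\<in>p. Henstock_Kurzweil_Integration.content K *\<^sub>R iN x) = (\<Sum>xK\<in>p. if fst xK \<in> N then Henstock_Kurzweil_Integration.content (snd xK) else 0)"
        by (rule sum.cong) (simp_all add: iN_def split_beta)
      also have "\<dots> = (\<Sum>xK\<in>p2. Henstock_Kurzweil_Integration.content (snd xK))"
        unfolding p2_def using finp by (simp add: sum.inter_filter)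
      finally show ?thesis .
    qed
    have small: "(\<Sum>xK\<in>p2. Henstock_Kurzweil_Integration.content (snd xK)) < \<delta>"
    proof -
      have "(\<Sum>(x,K)\<in>p. Henstock_Kurzweil_Integration.content K *\<^sub>R iN x) < \<delta>" using g2p[OF p fp2] by simp
      then show ?thesis using eq2 by simp
    qed
    have "(\<Sum>xK\<in>p2. \<bar>f (Sup (snd xK)) - f (Inf (snd xK))\<bar>) < \<epsilon>"
      by (rule division_AC_bound[OF acd p _ small]) (auto simp: p2_def)
    moreover have "(\<Sum>xK\<in>p2. \<bar>D xK\<bar>) = (\<Sum>xK\<in>p2. \<bar>f (Sup (snd xK)) - f (Inf (snd xK))\<bar>)"
      by (simp add: D_def case_prod_unfold)
    ultimately show ?thesis using eq1 by simp
  qed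
  finally have "f b - f a < I + \<epsilon> + \<epsilon> * (b - a) + \<epsilon>" by simp
  then show "f b - f a \<le> I + e" using e_eq by linarith
qed

lemma AC_FTC_eq:
  fixes f h :: "real \<Rightarrow> real"
  assumes ab: "a \<le> b" and ac: "absolutely_continuous_real_on f a b"
    and hint: "(h has_integral I) {a..b}"
    and N: "negligible N"
    and der: "\<And>t. t \<in> {a..b} - N \<Longrightarrow> (f has_real_derivative h t) (at t within {a..b})"
  shows "f b - f a = I"
proof -
  have 1: "f b - f a \<le> I" by (rule AC_FTC_le[OF ab ac hint N der])
  have ac': "absolutely_continuous_real_on (\<lambda>t. - f t) a b"
    using ac unfolding absolutely_continuous_real_on_def by (simp add: abs_minus_commute)
  have hint': "((\<lambda>t. - h t) has_integral - I) {a..b}" using has_integral_neg[OF hint] .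
  have der': "((\<lambda>t. - f t) has_real_derivative - h t) (at t within {a..b})" if "t \<in> {a..b} - N" for t
    using DERIV_minus[OF der[OF that]] .
  have "(- f b) - (- f a) \<le> - I" by (rule AC_FTC_le[OF ab ac' hint' N der'])
  with 1 show ?thesis by simp
qed

lemma action_lower:
  fixes lo hi :: "'e::finite \<Rightarrow> 'v::finite" and q W :: real
  assumes q: "q \<ge> 1" and adm: "admissible lo hi \<mu> \<nu> f v g"
    and Wle: "\<And>J. (\<forall>x. \<nu> x - \<mu> x = (\<Sum>k\<in>UNIV. incidence lo hi x k * J k)) \<Longrightarrow> W \<le> (\<Sum>k\<in>UNIV. \<bar>J k\<bar>)"
    and W0: "0 \<le> W"
  shows "ennreal W \<le> action q v g"
proof -
  define I where "I = (\<integral>\<^sup>+ t. ennreal (\<Sum>k\<in>UNIV. g t k * \<bar>v t k\<bar> powr q) * indicator {0..1} t \<partial>lborel)"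
  have act: "action q v g = enn_root q I" by (simp add: action_def I_def)
  show ?thesis
  proof (cases "I = \<infinity>")
    case True
    then show ?thesis by (simp add: act enn_root_def)
  next
    case False
    define Ir where "Ir = enn2real I"
    have Ir0: "0 \<le> Ir" by (simp add: Ir_def)
    have I_eq: "I = ennreal Ir" using False by (simp add: Ir_def less_top)
    have act2: "action q v g = ennreal (Ir powr (1 / q))" using False by (simp add: act enn_root_def Ir_def)
    have "W \<le> Ir powr (1 / q)"
    proof (cases "W = 0")
      case True
      then show ?thesis by simp
    next
      case False
      then have Wp: "W > 0" using W0 by simp
      have fp: "\<And>t. t \<in> {0..1} \<Longrightarrow> f t \<in> prob_vecs"
        and ac: "\<And>x. absolutely_continuous_real_on (\<lambda>t. f t x) 0 1"
        and vm[measurable]: "\<And>k. (\<lambda>t. v t k) \<in> borel_measurable (restrict_space lborel {0..1})"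
        and gm[measurable]: "\<And>k. (\<lambda>t. g t k) \<in> borel_measurable (restrict_space lborel {0..1})"
        and gp: "\<And>t. t \<in> {0..1} \<Longrightarrow> g t \<in> prob_vecs"
        and ae: "AE t in lborel. t \<in> {0..1} \<longrightarrow>
          (\<forall>x. ((\<lambda>s. f s x) has_real_derivative
               (\<Sum>k\<in>UNIV. incidence lo hi x k * v t k * g t k)) (at t within {0..1}))"
        and f0: "f 0 = \<mu>" and f1: "f 1 = \<nu>"
        using adm unfolding admissible_def by blast+
      have g0: "\<And>t k. t \<in> {0..1} \<Longrightarrow> 0 \<le> g t k" and gs: "\<And>t. t \<in> {0..1} \<Longrightarrow> (\<Sum>k\<in>UNIV. g t k) = 1"
        using gp unfolding prob_vecs_def by blast+
      define c1 where "c1 = W powr (1 - q) / q"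
      define c2 where "c2 = W * (q - 1) / q"
      have c1: "0 \<le> c1" and c2: "0 \<le> c2" using q W0 by (simp_all add: c1_def c2_def)
      define Hf where "Hf t = (\<Sum>k\<in>UNIV. g t k * \<bar>v t k\<bar>)" for t
      define Qf where "Qf t = (\<Sum>k\<in>UNIV. g t k * \<bar>v t k\<bar> powr q)" for t
      have Hf0: "0 \<le> Hf t" if "t \<in> {0..1}" for t
        unfolding Hf_def using g0[OF that] by (intro sum_nonneg) simp
      have Qf0: "0 \<le> Qf t" if "t \<in> {0..1}" for t
        unfolding Qf_def using g0[OF that] by (intro sum_nonneg) simp
      have young_pt: "Hf t \<le> c1 * Qf t + c2" if t: "t \<in> {0..1}" for t
      proof -
        have "Hf t \<le> (\<Sum>k\<in>UNIV. g t k * (c1 * \<bar>v t k\<bar> powr q + c2))"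
          unfolding Hf_def
        proof (intro sum_mono mult_left_mono)
          fix k
          show "\<bar>v t k\<bar> \<le> c1 * \<bar>v t k\<bar> powr q + c2"
            using young_aux[OF q Wp, of "\<bar>v t k\<bar>"] by (simp add: c1_def c2_def)
          show "0 \<le> g t k" using g0[OF t] .
        qed
        also have "\<dots> = c1 * (\<Sum>k\<in>UNIV. g t k * \<bar>v t k\<bar> powr q) + c2 * (\<Sum>k\<in>UNIV. g t k)"
          by (simp add: distrib_left sum.distrib sum_distrib_left mult_ac)
        also have "\<dots> = c1 * Qf t + c2" using gs[OF t] by (simp add: Qf_def)
        finally show ?thesis .
      qed
      have mHf[measurable]: "Hf \<in> borel_measurable (restrict_space lborel {0..1})"
        unfolding Hf_def by measurable
      have mQf[measurable]: "Qf \<in> borel_measurable (restrict_space lborel {0..1})"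
        unfolding Qf_def by measurable
      have mj[measurable]: "(\<lambda>t. v t k * g t k) \<in> borel_measurable (restrict_space lborel {0..1})" for k
        by measurable
      have mGk[measurable]: "(\<lambda>t. g t k * \<bar>v t k\<bar>) \<in> borel_measurable (restrict_space lborel {0..1})" for k
        by measurable
      define H where "H t = indicator {0..1} t * Hf t" for t
      define G where "G k t = indicator {0..1} t * (g t k * \<bar>v t k\<bar>)" for k t
      define jk where "jk k t = indicator {0..1} t * (v t k * g t k)" for k t
      have toL: "(\<lambda>t. indicator {0..1::real} t * F t) \<in> borel_measurable lborel"
        if "F \<in> borel_measurable (restrict_space lborel {0..1})" for F :: "real \<Rightarrow> real"
        using that by (subst (asm) borel_measurable_restrict_space_iff) simp_all
      have mH[measurable]: "H \<in> borel_measurable lborel" unfolding H_def by (rule toL) (rule mHf)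
      have mG[measurable]: "G k \<in> borel_measurable lborel" for k unfolding G_def by (rule toL) (rule mGk)
      have mjk[measurable]: "jk k \<in> borel_measurable lborel" for k unfolding jk_def by (rule toL) (rule mj)
      have mQl: "(\<lambda>t. ennreal (Qf t) * indicator {0..1} t) \<in> borel_measurable lborel"
      proof -
        have "(\<lambda>t. ennreal (Qf t)) \<in> borel_measurable (restrict_space lborel {0..1})" by measurable
        then show ?thesis by (subst (asm) borel_measurable_restrict_space_iff_ennreal) simp_all
      qed
      have I_Q: "I = (\<integral>\<^sup>+ t. ennreal (Qf t) * indicator {0..1} t \<partial>lborel)"
        by (simp add: I_def Qf_def)
      have nnH: "(\<integral>\<^sup>+ t. ennreal (H t) \<partial>lborel) \<le> ennreal (c1 * Ir + c2)"
      proof -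
        have "(\<integral>\<^sup>+ t. ennreal (H t) \<partial>lborel) \<le>
            (\<integral>\<^sup>+ t. ennreal c1 * (ennreal (Qf t) * indicator {0..1} t) + ennreal c2 * indicator {0..1} t \<partial>lborel)"
        proof (rule nn_integral_mono)
          fix t :: real
          show "ennreal (H t) \<le> ennreal c1 * (ennreal (Qf t) * indicator {0..1} t) + ennreal c2 * indicator {0..1} t"
          proof (cases "t \<in> {0..1}")
            case True
            have "ennreal (H t) \<le> ennreal (c1 * Qf t + c2)"
              using True ennreal_leI[OF young_pt[OF True]] by (simp add: H_def)
            also have "\<dots> = ennreal c1 * ennreal (Qf t) + ennreal c2"
              using c1 c2 Qf0[OF True] by (simp add: ennreal_mult)
            finally show ?thesis using True by simp
          next
            case False
            then show ?thesis by (simp add: H_def)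
          qed
        qed
        also have "\<dots> = ennreal c1 * I + ennreal c2 * emeasure lborel {0..1::real}"
          using mQl by (simp add: nn_integral_add nn_integral_cmult nn_integral_cmult_indicator I_Q)
        also have "\<dots> = ennreal (c1 * Ir + c2)"
          using c1 c2 Ir0 by (simp add: I_eq ennreal_mult)
        finally show ?thesis .
      qed
      have H0: "0 \<le> H t" for t using Hf0 by (simp add: H_def indicator_def)
      have intH: "integrable lborel H"
      proof (rule integrableI_bounded)
        show "H \<in> borel_measurable lborel" by (rule mH)
        have "(\<integral>\<^sup>+ t. ennreal (norm (H t)) \<partial>lborel) = (\<integral>\<^sup>+ t. ennreal (H t) \<partial>lborel)"
          using H0 by simp
        also have "\<dots> < \<infinity>" using nnH by (simp add: le_less_trans)
        finally show "(\<integral>\<^sup>+ t. ennreal (norm (H t)) \<partial>lborel) < \<infinity>" .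
      qed
      have Gle: "\<bar>G k t\<bar> \<le> H t" for k t
      proof (cases "t \<in> {0..1}")
        case True
        have "g t k * \<bar>v t k\<bar> \<le> Hf t" unfolding Hf_def
          by (rule member_le_sum) (use g0[OF True] in simp_all)
        then show ?thesis using True g0[OF True, of k] by (simp add: G_def H_def)
      qed (simp add: G_def H_def)
      have jkG: "\<bar>jk k t\<bar> = G k t" for k t
      proof (cases "t \<in> {0..1}")
        case True
        then show ?thesis using g0[OF True, of k] by (simp add: jk_def G_def abs_mult)
      qed (simp add: jk_def G_def)
      have Gle': "G k t \<le> H t" for k t using Gle[of k t] by linarith
      have intG: "integrable lborel (G k)" for k
        by (rule Bochner_Integration.integrable_bound[OF intH]) (use Gle H0 in auto)
      have intj: "integrable lborel (jk k)" for k
        by (rule Bochner_Integration.integrable_bound[OF intH]) (use Gle Gle' H0 jkG in auto)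
      define Jb where "Jb k = integral\<^sup>L lborel (jk k)" for k
      have hk: "((\<lambda>t. v t k * g t k) has_integral Jb k) {0..1}" for k
      proof -
        have "(jk k has_integral Jb k) UNIV" unfolding Jb_def by (rule has_integral_integral_lborel[OF intj])
        moreover have "jk k = (\<lambda>t. if t \<in> {0..1} then v t k * g t k else 0)"
          by (rule ext) (simp add: jk_def indicator_def)
        ultimately have "((\<lambda>t. if t \<in> {0..1} then v t k * g t k else 0) has_integral Jb k) UNIV" by simp
        then show ?thesis by (simp only: has_integral_restrict_UNIV)
      qed
      obtain N where N1: "{t \<in> space lborel. \<not> (t \<in> {0..1} \<longrightarrow>
          (\<forall>x. ((\<lambda>s. f s x) has_real_derivative
               (\<Sum>k\<in>UNIV. incidence lo hi x k * v t k * g t k)) (at t within {0..1})))} \<subseteq> N"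
        and N2: "emeasure lborel N = 0" and N3: "N \<in> sets lborel"
        using ae by (rule AE_E)
      have negN: "negligible N"
        unfolding negligible_iff_null_sets using N2 N3 by (intro null_sets_completionI null_setsI)
      have flow: "\<forall>x. \<nu> x - \<mu> x = (\<Sum>k\<in>UNIV. incidence lo hi x k * Jb k)"
      proof
        fix x
        have hint: "((\<lambda>t. \<Sum>k\<in>UNIV. incidence lo hi x k * v t k * g t k) has_integral
            (\<Sum>k\<in>UNIV. incidence lo hi x k * Jb k)) {0..1}"
          using has_integral_sum[of UNIV "\<lambda>k t. incidence lo hi x k * (v t k * g t k)" "\<lambda>k. incidence lo hi x k * Jb k" "{0..1}"]
            has_integral_mult_right[OF hk]
          by (simp add: mult.assoc)
        have der: "((\<lambda>s. f s x) has_real_derivative (\<Sum>k\<in>UNIV. incidence lo hi x k * v t k * g t k)) (at t within {0..1})"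
          if "t \<in> {0..1} - N" for t
          using N1 that by auto
        have "f 1 x - f 0 x = (\<Sum>k\<in>UNIV. incidence lo hi x k * Jb k)"
          by (rule AC_FTC_eq[OF zero_le_one ac hint negN der])
        then show "\<nu> x - \<mu> x = (\<Sum>k\<in>UNIV. incidence lo hi x k * Jb k)" using f0 f1 by simp
      qed
      have "W \<le> (\<Sum>k\<in>UNIV. \<bar>Jb k\<bar>)" by (rule Wle[OF flow])
      also have "\<dots> \<le> (\<Sum>k\<in>UNIV. integral\<^sup>L lborel (G k))"
      proof (rule sum_mono)
        fix k
        show "\<bar>Jb k\<bar> \<le> integral\<^sup>L lborel (G k)"
          unfolding Jb_def by (rule integral_abs_bound_integral[OF intj intG]) (simp add: jkG)
      qed
      also have "\<dots> = integral\<^sup>L lborel (\<lambda>t. \<Sum>k\<in>UNIV. G k t)"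
        by (rule Bochner_Integration.integral_sum[symmetric]) (rule intG)
      also have "(\<lambda>t. \<Sum>k\<in>UNIV. G k t) = H"
        by (rule ext) (simp add: G_def H_def Hf_def sum_distrib_left)
      also have "integral\<^sup>L lborel H \<le> c1 * Ir + c2"
      proof -
        have "ennreal (integral\<^sup>L lborel H) = (\<integral>\<^sup>+ t. ennreal (H t) \<partial>lborel)"
          by (rule nn_integral_eq_integral[OF intH, symmetric]) (simp add: H0)
        also have "\<dots> \<le> ennreal (c1 * Ir + c2)" by (rule nnH)
        finally have le: "ennreal (integral\<^sup>L lborel H) \<le> ennreal (c1 * Ir + c2)" .
        have pos: "0 \<le> c1 * Ir + c2" using c1 c2 Ir0 by simp
        show ?thesis using le ennreal_le_iff[OF pos] by blast
      qed
      finally have "W \<le> W powr (1 - q) / q * Ir + W * (q - 1) / q" by (simp add: c1_def c2_def)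
      then show ?thesis by (rule powr_from_young[OF q Wp Ir0])
    qed
    then show ?thesis by (simp add: act2)
  qed
qed

lemma construct:
  fixes lo hi :: "'e::finite \<Rightarrow> 'v::finite" and q :: real
  assumes q: "q \<ge> 1" and \<mu>: "\<mu> \<in> prob_vecs" and \<nu>: "\<nu> \<in> prob_vecs"
    and flow: "\<forall>x. \<nu> x - \<mu> x = (\<Sum>k\<in>UNIV. incidence lo hi x k * J k)"
  shows "\<exists>f v g. admissible lo hi \<mu> \<nu> f v g \<and> action q v g = ennreal (\<Sum>k\<in>UNIV. \<bar>J k\<bar>)"
proof -
  define S where "S = (\<Sum>k\<in>UNIV. \<bar>J k\<bar>)"
  have S0: "0 \<le> S" by (simp add: S_def sum_nonneg)
  define f where "f t x = \<mu> x + t * (\<nu> x - \<mu> x)" for t :: real and x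
  define g :: "real \<Rightarrow> 'e \<Rightarrow> real" where "g t k = (if S = 0 then 1 / real CARD('e) else \<bar>J k\<bar> / S)" for t k
  define v :: "real \<Rightarrow> 'e \<Rightarrow> real" where "v t k = (if S = 0 then 0 else S * sgn (J k))" for t k
  have J0: "J k = 0" if "S = 0" for k
  proof -
    have "\<forall>k\<in>UNIV. \<bar>J k\<bar> = 0" using that unfolding S_def by (subst (asm) sum_nonneg_eq_0_iff) auto
    then show ?thesis by simp
  qed
  have vg: "v t k * g t k = J k" for t k
  proof (cases "S = 0")
    case True then show ?thesis using J0 by (simp add: v_def g_def)
  next
    case False
    have "v t k * g t k = sgn (J k) * \<bar>J k\<bar>" using False by (simp add: v_def g_def)
    then show ?thesis by (simp add: sgn_mult_abs)
  qed
  have gprob: "g t \<in> prob_vecs" for t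
  proof (cases "S = 0")
    case True
    have "real CARD('e) > 0" by simp
    then show ?thesis using True by (simp add: prob_vecs_def g_def)
  next
    case False
    then have "S > 0" using S0 by simp
    moreover have "(\<Sum>k\<in>UNIV. \<bar>J k\<bar> / S) = S / S" unfolding S_def by (rule sum_divide_distrib[symmetric])
    ultimately show ?thesis using False by (simp add: prob_vecs_def g_def)
  qed
  have fprob: "f t \<in> prob_vecs" if "t \<in> {0..1}" for t
  proof -
    have t: "0 \<le> t" "t \<le> 1" using that by auto
    have "0 \<le> f t x" for x
    proof -
      have "f t x = (1 - t) * \<mu> x + t * \<nu> x" by (simp add: f_def algebra_simps)
      moreover have "0 \<le> \<mu> x" "0 \<le> \<nu> x" using \<mu> \<nu> by (auto simp: prob_vecs_def)
      ultimately show ?thesis using t by simp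
    qed
    moreover have "(\<Sum>x\<in>UNIV. f t x) = 1"
    proof -
      have "(\<Sum>x\<in>UNIV. f t x) = (\<Sum>x\<in>UNIV. \<mu> x) + t * ((\<Sum>x\<in>UNIV. \<nu> x) - (\<Sum>x\<in>UNIV. \<mu> x))"
        by (simp add: f_def sum.distrib sum_subtractf flip: sum_distrib_left)
      then show ?thesis using \<mu> \<nu> by (simp add: prob_vecs_def)
    qed
    ultimately show ?thesis by (simp add: prob_vecs_def)
  qed
  have adm: "admissible lo hi \<mu> \<nu> f v g"
    unfolding admissible_def
  proof (intro conjI ballI allI)
    show "f t \<in> prob_vecs" if "t \<in> {0..1}" for t using fprob that .
    show "absolutely_continuous_real_on (\<lambda>t. f t x) 0 1" for x
      unfolding f_def by (rule AC_affine)
    show "(\<lambda>t. v t k) \<in> borel_measurable (restrict_space lborel {0..1})" for k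
      by (simp add: v_def)
    show "(\<lambda>t. g t k) \<in> borel_measurable (restrict_space lborel {0..1})" for k
      by (simp add: g_def)
    show "g t \<in> prob_vecs" for t by (rule gprob)
    show "f 0 = \<mu>" by (rule ext) (simp add: f_def)
    show "f 1 = \<nu>" by (rule ext) (simp add: f_def)
    show "AE t in lborel. t \<in> {0..1} \<longrightarrow>
        (\<forall>x. ((\<lambda>s. f s x) has_real_derivative
               (\<Sum>k\<in>UNIV. incidence lo hi x k * v t k * g t k)) (at t within {0..1}))"
    proof (rule AE_I2, intro impI allI)
      fix t x
      have "(\<Sum>k\<in>UNIV. incidence lo hi x k * v t k * g t k) = \<nu> x - \<mu> x"
        using flow vg by (simp add: mult.assoc)
      moreover have "((\<lambda>s. f s x) has_real_derivative (\<nu> x - \<mu> x)) (at t within {0..1})"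
        unfolding f_def by (auto intro!: derivative_eq_intros)
      ultimately show "((\<lambda>s. f s x) has_real_derivative
               (\<Sum>k\<in>UNIV. incidence lo hi x k * v t k * g t k)) (at t within {0..1})" by simp
    qed
  qed
  have integrand: "(\<Sum>k\<in>UNIV. g t k * \<bar>v t k\<bar> powr q) = S powr q" for t
  proof (cases "S = 0")
    case True
    then show ?thesis using q by (simp add: v_def)
  next
    case False
    then have Sp: "S > 0" using S0 by simp
    have "g t k * \<bar>v t k\<bar> powr q = \<bar>J k\<bar> / S * S powr q" for k
    proof (cases "J k = 0")
      case True then show ?thesis using Sp by (simp add: g_def)
    next
      case False
      then have "\<bar>v t k\<bar> = S" using Sp \<open>S \<noteq> 0\<close> by (simp add: v_def abs_mult abs_sgn_eq)
      then show ?thesis using \<open>S \<noteq> 0\<close> by (simp add: g_def)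
    qed
    then have "(\<Sum>k\<in>UNIV. g t k * \<bar>v t k\<bar> powr q) = (\<Sum>k\<in>UNIV. \<bar>J k\<bar> / S * S powr q)" by simp
    also have "\<dots> = (\<Sum>k\<in>UNIV. \<bar>J k\<bar> / S) * S powr q" by (rule sum_distrib_right[symmetric])
    also have "(\<Sum>k\<in>UNIV. \<bar>J k\<bar> / S) = S / S" unfolding S_def by (rule sum_divide_distrib[symmetric])
    finally show ?thesis using Sp by simp
  qed
  have "action q v g = ennreal S"
  proof -
    have "(\<integral>\<^sup>+ t. ennreal (\<Sum>k\<in>UNIV. g t k * \<bar>v t k\<bar> powr q) * indicator {0..1} t \<partial>lborel)
        = (\<integral>\<^sup>+ t. ennreal (S powr q) * indicator {0..1::real} t \<partial>lborel)"
      by (simp add: integrand)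
    also have "\<dots> = ennreal (S powr q)" by (simp add: nn_integral_cmult_indicator)
    finally have "action q v g = enn_root q (ennreal (S powr q))" by (simp add: action_def)
    also have "\<dots> = ennreal ((S powr q) powr (1 / q))" by (simp add: enn_root_def)
    also have "(S powr q) powr (1 / q) = S" using q S0 by (simp add: powr_powr)
    finally show ?thesis .
  qed
  then show ?thesis using adm by (auto simp: S_def)
qed

lemma sum_pairs: "(\<Sum>z\<in>(UNIV::('a::finite \<times> 'b::finite) set). F z) = (\<Sum>a\<in>UNIV. \<Sum>b\<in>UNIV. F (a, b))"
  by (simp add: sum.cartesian_product split_beta)

theorem mainTheorem6:
  fixes lo hi :: "'e::finite \<Rightarrow> 'v::finite" and q :: real
    and \<mu> \<nu> :: "'v \<Rightarrow> real"
  assumes "simple_oriented_graph lo hi"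
    and "connected_graph lo hi"
    and "q \<ge> 1"
    and "\<mu> \<in> prob_vecs" and "\<nu> \<in> prob_vecs"
  shows "ennreal (W1 lo hi \<mu> \<nu>) =
           (INF (f, v, g) \<in> {(f, v, g). admissible lo hi \<mu> \<nu> f v g}. action q v g)
     \<and> (\<exists>f v g. admissible lo hi \<mu> \<nu> f v g \<and> action q v g = ennreal (W1 lo hi \<mu> \<nu>))"
proof -
  have lohi: "\<forall>k. lo k \<noteq> hi k" using assms(1) by (simp add: simple_oriented_graph_def)
  define d where "d = (\<lambda>x y. real (graph_dist lo hi x y))"
  have tri: "\<And>x y z. d x z \<le> d x y + d y z"
    unfolding d_def by (metis of_nat_add of_nat_le_iff graph_dist_triangle[OF assms(2)])
  have d0: "\<And>x. d x x = 0" by (simp add: d_def graph_dist_refl)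
  have d1: "\<And>k. d (lo k) (hi k) \<le> 1" "\<And>k. d (hi k) (lo k) \<le> 1"
    using graph_dist_edge by (simp_all add: d_def)
  have dnn: "\<And>x y. 0 \<le> d x y" by (simp add: d_def)
  have \<mu>0: "\<forall>x. 0 \<le> \<mu> x" and \<nu>0: "\<forall>x. 0 \<le> \<nu> x" using assms(4,5) by (auto simp: prob_vecs_def)
  define W where "W = W1 lo hi \<mu> \<nu>"
  have Weq: "W = Inf (cost d ` couplings \<mu> \<nu>)" by (simp add: W_def W1_def cost_def d_def)
  obtain \<pi>0 where \<pi>0: "\<pi>0 \<in> couplings \<mu> \<nu>" and min: "\<forall>\<pi>'\<in>couplings \<mu> \<nu>. cost d \<pi>0 \<le> cost d \<pi>'"
    using opt_coupling[OF assms(4,5)] by blast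
  have Wc: "W = cost d \<pi>0" unfolding Weq by (rule cInf_eq_minimum) (use \<pi>0 min in auto)
  have \<pi>0nn: "\<And>z. 0 \<le> \<pi>0 z" using \<pi>0 unfolding couplings_def mem_Collect_eq by blast
  have W0: "0 \<le> W" unfolding Wc cost_def by (intro sum_nonneg mult_nonneg_nonneg dnn \<pi>0nn)
  have Wle: "W \<le> (\<Sum>k\<in>UNIV. \<bar>J k\<bar>)" if hyp: "\<forall>x. \<nu> x - \<mu> x = (\<Sum>k\<in>UNIV. incidence lo hi x k * J k)" for J
  proof -
    obtain \<pi> where \<pi>: "\<pi> \<in> couplings \<mu> \<nu>" and c: "cost d \<pi> \<le> (\<Sum>k\<in>UNIV. \<bar>J k\<bar>)"
      using flow_coupling[OF lohi tri d0 d1(1) d1(2) refl \<mu>0 \<nu>0 hyp] by blast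
    show ?thesis using min \<pi> c Wc by force
  qed
  have LB: "ennreal W \<le> action q v g" if "admissible lo hi \<mu> \<nu> f v g" for f v g
    by (rule action_lower[OF assms(3) that Wle W0])
  have "\<forall>z::'v \<times> 'v. \<exists>P. (\<forall>w. (\<Sum>k\<in>UNIV. incidence lo hi w k * P k) = (if w = snd z then 1 else 0) - (if w = fst z then 1 else 0))
      \<and> (\<Sum>k\<in>UNIV. \<bar>P k\<bar>) \<le> d (fst z) (snd z)"
  proof
    fix z :: "'v \<times> 'v"
    obtain xs where xs: "is_walk lo hi xs (fst z) (snd z)" "length xs = Suc (graph_dist lo hi (fst z) (snd z))"
      using graph_dist_walk[OF assms(2)] by blast
    from walk_flow[OF lohi xs(1)] xs(2)
    show "\<exists>P. (\<forall>w. (\<Sum>k\<in>UNIV. incidence lo hi w k * P k) = (if w = snd z then 1 else 0) - (if w = fst z then 1 else 0))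
      \<and> (\<Sum>k\<in>UNIV. \<bar>P k\<bar>) \<le> d (fst z) (snd z)" by (simp add: d_def)
  qed
  from choice[OF this] obtain Pf where Pf: "\<And>z w. (\<Sum>k\<in>UNIV. incidence lo hi w k * Pf z k) = (if w = snd z then 1 else 0) - (if w = fst z then 1 else 0)"
      "\<And>z. (\<Sum>k\<in>UNIV. \<bar>Pf z k\<bar>) \<le> d (fst z) (snd z)"
    by blast
  define J0 where "J0 k = (\<Sum>z\<in>UNIV. \<pi>0 z * Pf z k)" for k
  have row: "\<And>x. (\<Sum>b\<in>UNIV. \<pi>0 (x, b)) = \<mu> x" and col: "\<And>x. (\<Sum>a\<in>UNIV. \<pi>0 (a, x)) = \<nu> x"
    using \<pi>0 unfolding couplings_def by auto
  have flow0: "\<forall>x. \<nu> x - \<mu> x = (\<Sum>k\<in>UNIV. incidence lo hi x k * J0 k)"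
  proof
    fix x
    have "(\<Sum>k\<in>UNIV. incidence lo hi x k * J0 k) = (\<Sum>k\<in>UNIV. \<Sum>z\<in>UNIV. \<pi>0 z * (incidence lo hi x k * Pf z k))"
      by (simp add: J0_def sum_distrib_left mult_ac)
    also have "\<dots> = (\<Sum>z\<in>UNIV. \<Sum>k\<in>UNIV. \<pi>0 z * (incidence lo hi x k * Pf z k))"
      by (rule sum.swap)
    also have "\<dots> = (\<Sum>z\<in>UNIV. \<pi>0 z * ((if x = snd z then 1 else 0) - (if x = fst z then 1 else 0)))"
      by (simp add: Pf(1) flip: sum_distrib_left)
    also have "\<dots> = (\<Sum>a\<in>UNIV. \<Sum>b\<in>UNIV. \<pi>0 (a, b) * ((if x = b then 1 else 0) - (if x = a then 1 else 0)))"
      by (subst sum_pairs) simp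
    also have "\<dots> = (\<Sum>a\<in>UNIV. \<pi>0 (a, x)) - (\<Sum>b\<in>UNIV. \<pi>0 (x, b))"
    proof -
      have "(\<Sum>a\<in>UNIV. \<Sum>b\<in>UNIV. \<pi>0 (a, b) * ((if x = b then 1 else 0) - (if x = a then 1 else 0)))
          = (\<Sum>a\<in>UNIV. \<Sum>b\<in>UNIV. (if b = x then \<pi>0 (a, b) else 0)) - (\<Sum>a\<in>UNIV. \<Sum>b\<in>UNIV. (if a = x then \<pi>0 (a, b) else 0))"
      proof -
        have pt: "\<And>a b. \<pi>0 (a, b) * ((if x = b then 1 else 0) - (if x = a then 1 else 0))
            = (if b = x then \<pi>0 (a, b) else 0) - (if a = x then \<pi>0 (a, b) else 0)" by auto
        show ?thesis by (simp only: pt sum_subtractf)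
      qed
      also have "(\<Sum>a\<in>UNIV. \<Sum>b\<in>UNIV. (if b = x then \<pi>0 (a, b) else 0)) = (\<Sum>a\<in>UNIV. \<pi>0 (a, x))"
        by simp
      also have "(\<Sum>a\<in>UNIV. \<Sum>b\<in>UNIV. (if a = x then \<pi>0 (a, b) else 0)) = (\<Sum>b\<in>UNIV. \<pi>0 (x, b))"
      proof -
        have "(\<Sum>b\<in>UNIV. if a = x then \<pi>0 (a, b) else 0) = (if a = x then (\<Sum>b\<in>UNIV. \<pi>0 (x, b)) else 0)" for a
          by (cases "a = x") simp_all
        then show ?thesis by simp
      qed
      finally show ?thesis .
    qed
    finally show "\<nu> x - \<mu> x = (\<Sum>k\<in>UNIV. incidence lo hi x k * J0 k)" using row col by simp
  qed
  have abs0: "(\<Sum>k\<in>UNIV. \<bar>J0 k\<bar>) \<le> W"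
  proof -
    have "(\<Sum>k\<in>UNIV. \<bar>J0 k\<bar>) \<le> (\<Sum>k\<in>UNIV. \<Sum>z\<in>UNIV. \<pi>0 z * \<bar>Pf z k\<bar>)"
    proof (rule sum_mono)
      fix k
      have "\<bar>J0 k\<bar> \<le> (\<Sum>z\<in>UNIV. \<bar>\<pi>0 z * Pf z k\<bar>)" unfolding J0_def by (rule sum_abs)
      also have "\<dots> = (\<Sum>z\<in>UNIV. \<pi>0 z * \<bar>Pf z k\<bar>)" using \<pi>0nn by (simp add: abs_mult)
      finally show "\<bar>J0 k\<bar> \<le> (\<Sum>z\<in>UNIV. \<pi>0 z * \<bar>Pf z k\<bar>)" .
    qed
    also have "\<dots> = (\<Sum>z\<in>UNIV. \<pi>0 z * (\<Sum>k\<in>UNIV. \<bar>Pf z k\<bar>))"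
      by (subst sum.swap) (simp add: sum_distrib_left)
    also have "\<dots> \<le> (\<Sum>z\<in>UNIV. \<pi>0 z * d (fst z) (snd z))"
      by (intro sum_mono mult_left_mono Pf(2) \<pi>0nn)
    also have "\<dots> = W" by (simp add: Wc cost_def mult.commute)
    finally show ?thesis .
  qed
  obtain f v g where adm: "admissible lo hi \<mu> \<nu> f v g" and actJ: "action q v g = ennreal (\<Sum>k\<in>UNIV. \<bar>J0 k\<bar>)"
    using construct[OF assms(3,4,5) flow0] by blast
  have "ennreal W \<le> ennreal (\<Sum>k\<in>UNIV. \<bar>J0 k\<bar>)" using LB[OF adm] actJ by simp
  then have "W \<le> (\<Sum>k\<in>UNIV. \<bar>J0 k\<bar>)" using ennreal_le_iff[of "\<Sum>k\<in>UNIV. \<bar>J0 k\<bar>" W] by (simp add: sum_nonneg)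
  then have "(\<Sum>k\<in>UNIV. \<bar>J0 k\<bar>) = W" using abs0 by linarith
  then have actW: "action q v g = ennreal W" using actJ by simp
  have "ennreal W = (INF (f, v, g) \<in> {(f, v, g). admissible lo hi \<mu> \<nu> f v g}. action q v g)"
  proof (rule antisym)
    show "ennreal W \<le> (INF (f, v, g) \<in> {(f, v, g). admissible lo hi \<mu> \<nu> f v g}. action q v g)"
      by (rule INF_greatest) (auto intro: LB)
    have "(INF (f, v, g) \<in> {(f, v, g). admissible lo hi \<mu> \<nu> f v g}. action q v g) \<le> (\<lambda>(f, v, g). action q v g) (f, v, g)"
      by (rule INF_lower) (simp add: adm)
    then show "(INF (f, v, g) \<in> {(f, v, g). admissible lo hi \<mu> \<nu> f v g}. action q v g) \<le> ennreal W"
      using actW by simp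
  qed
  then show ?thesis using adm actW unfolding W_def by blast
qed


end
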